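(* Let $X_0=0$ and $X_n=\sum_{j=1}^{X_{n-1}}\xi_{n,j}+\varepsilon_n$ for $n\ge1$, where $\{\xi_{n,j},\varepsilon_n\}$ are independent nonnegative integer-valued random variables with $\xi_{n,j}$, $j\in\mathbb N$, identically distributed for each $n$. Let $G_n(x)=\mathbb E x^{\xi_{n,1}}$, $H_n(x)=\mathbb E x^{\varepsilon_n}$, $\rho_n=G_n'(1)$, and $m_{n,k}=H_n^{(k)}(1)$ (finite for $k=1,2$); assume $G_n^{(s)}(1)<\infty$ for all $s\ge1$ and $n$. Assume (i) $\rho_n<1$, $\lim_n\rho_n=1$, $\sum_{n=1}^\infty(1-\rho_n)=\infty$; (ii) $\lim_{n\to\infty}G_n''(1)/(1-\rho_n)=\nu\in(0,\infty)$; (iii) $\lim_{n\to\infty}G_n^{(s)}(1)/(1-\rho_n)=0$ for every $s\ge3$; (iv) $\lim_{n\to\infty}m_{n,1}/(1-\rho_n)=\lambda$ and $\lim_{n\to\infty}m_{n,2}/(1-\rho_n)=0$. Then $X_n$ converges in distribution to the negative binomial distribution $\mathrm{NB}(2\lambda/\nu,\ \nu/(2+\nu))$.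
   Context: For $r>0$, $p\in(0,1)$, $\mathrm{NB}(r,p)$ is the distribution on $\{0,1,2,\dots\}$ with $\mathbb P\{X=k\}=\binom{k+r-1}{r-1}(1-p)^rp^k$, where $\binom{k+r-1}{r-1}=\frac{(k+r-1)(k+r-2)\cdots r}{k!}$; its generating function is $\big(\frac{1-p}{1-px}\big)^r$. For $\lambda=0$ the distribution is understood as the point mass at $0$. *)

theory Defs
  imports "HOL-Probability.Probability"
begin

fun bp_X :: "(nat \<Rightarrow> nat \<Rightarrow> 'a \<Rightarrow> nat) \<Rightarrow> (nat \<Rightarrow> 'a \<Rightarrow> nat) \<Rightarrow> nat \<Rightarrow> 'a \<Rightarrow> nat" where
  "bp_X \<xi> \<epsilon> 0 \<omega> = 0"
| "bp_X \<xi> \<epsilon> (Suc n) \<omega> = (\<Sum>j = 1..bp_X \<xi> \<epsilon> n \<omega>. \<xi> (Suc n) j \<omega>) + \<epsilon> (Suc n) \<omega>"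

text \<open>For a nonnegative integer random variable Z with generating function F,
  the s-th (left) derivative F^(s)(1) equals E[Z(Z-1)...(Z-s+1)].\<close>
definition falling_fact :: "nat \<Rightarrow> nat \<Rightarrow> real" where
  "falling_fact s z = (\<Prod>i<s. real z - real i)"

text \<open>F^(s)(1) is finite iff the factorial moment is finite (integrable).\<close>
definition fact_moment_finite :: "'a measure \<Rightarrow> ('a \<Rightarrow> nat) \<Rightarrow> nat \<Rightarrow> bool" where
  "fact_moment_finite M Z s \<longleftrightarrow> integrable M (\<lambda>\<omega>. falling_fact s (Z \<omega>))"

definition fact_moment :: "'a measure \<Rightarrow> ('a \<Rightarrow> nat) \<Rightarrow> nat \<Rightarrow> real" where
  "fact_moment M Z s = (\<integral>\<omega>. falling_fact s (Z \<omega>) \<partial>M)"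

text \<open>Negative binomial probabilities NB(r,p):
  P{X=k} = binom(k+r-1, r-1) (1-p)^r p^k, with binom(k+r-1,r-1) = (r+k-1) gchoose k.
  For r = 0 this is the point mass at 0.\<close>
definition nb_prob :: "real \<Rightarrow> real \<Rightarrow> nat \<Rightarrow> real" where
  "nb_prob r p k = ((r + real k - 1) gchoose k) * (1 - p) powr r * p ^ k"

definition nb_measure :: "real \<Rightarrow> real \<Rightarrow> real measure" where
  "nb_measure r p = distr (density (count_space UNIV) (\<lambda>k::nat. ennreal (nb_prob r p k))) borel real"

end

theory Submission
  imports Defs
begin


lemma one_minus_pow_step: "1 - (1-u)^(Suc z) = u + (1-u)*(1 - (1-u)^z)" for u :: real
  by (simp add: algebra_simps)

lemma binom_ineq_basic:
  fixes u :: real and z :: nat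
  assumes "0 \<le> u" "u \<le> 1"
  shows "0 \<le> 1 - (1-u)^z \<and> 1 - (1-u)^z \<le> real z * u"
proof -
  have "(1-u)^z \<le> 1" using assms by (simp add: power_le_one)
  moreover have "1 - (1-u)^z \<le> real z * u"
  proof (induction z)
    case 0 then show ?case by simp
  next
    case (Suc z)
    have p: "(1-u)^z \<le> 1" using assms by (simp add: power_le_one)
    have "(1-u)*(1 - (1-u)^z) \<le> 1 - (1-u)^z" using p assms by (intro mult_left_le_one_le) auto
    then have "u + (1-u)*(1 - (1-u)^z) \<le> u + real z * u" using Suc by linarith
    then show ?case unfolding one_minus_pow_step by (simp add: algebra_simps)
  qed
  ultimately show ?thesis by simp
qed

lemma binom_ineq_lower:
  fixes u :: real and z :: nat
  assumes "0 \<le> u" "u \<le> 1"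
  shows "real z * u - real z * (real z - 1) / 2 * u^2 \<le> 1 - (1-u)^z"
proof (induction z)
  case 0 then show ?case by simp
next
  case (Suc z)
  have "(1-u) * (real z * u - real z * (real z - 1) / 2 * u^2) \<le> (1-u)*(1 - (1-u)^z)"
    using Suc assms by (intro mult_left_mono) auto
  moreover have "real z * (real z - 1) / 2 * u^3 \<ge> 0"
    using assms by (cases z) auto
  moreover have "u + (1-u) * (real z * u - real z * (real z - 1) / 2 * u^2)
       = real (Suc z) * u - real (Suc z) * (real (Suc z) - 1) / 2 * u^2 + real z * (real z - 1) / 2 * u^3"
    by (simp add: field_simps power2_eq_square power3_eq_cube)
  ultimately show ?case unfolding one_minus_pow_step by linarith
qed

lemma binom_ineq_upper:
  fixes u :: real and z :: nat
  assumes "0 \<le> u" "u \<le> 1"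
  shows "1 - (1-u)^z \<le> real z * u - real z * (real z - 1) / 2 * u^2
            + real z * (real z - 1) * (real z - 2) / 6 * u^3"
proof (induction z)
  case 0 then show ?case by simp
next
  case (Suc z)
  have "(1-u)*(1 - (1-u)^z) \<le> (1-u) * (real z * u - real z * (real z - 1) / 2 * u^2
            + real z * (real z - 1) * (real z - 2) / 6 * u^3)"
    using Suc assms by (intro mult_left_mono) auto
  moreover have "real z * (real z - 1) * (real z - 2) / 6 * u^4 \<ge> 0"
  proof -
    have "real z * (real z - 1) * (real z - 2) \<ge> 0"
      by (cases "z \<le> 2") (auto simp: le_Suc_eq numeral_2_eq_2)
    then show ?thesis using assms by simp
  qed
  moreover have "u + (1-u) * (real z * u - real z * (real z - 1) / 2 * u^2
            + real z * (real z - 1) * (real z - 2) / 6 * u^3)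
       = real (Suc z) * u - real (Suc z) * (real (Suc z) - 1) / 2 * u^2
            + real (Suc z) * (real (Suc z) - 1) * (real (Suc z) - 2) / 6 * u^3
         - real z * (real z - 1) * (real z - 2) / 6 * u^4"
    by (simp add: field_simps power2_eq_square power3_eq_cube power4_eq_xxxx)
  ultimately show ?case unfolding one_minus_pow_step by linarith
qed

fun uc :: "(nat \<Rightarrow> real \<Rightarrow> real) \<Rightarrow> nat \<Rightarrow> nat \<Rightarrow> real \<Rightarrow> real" where
  "uc g k 0 u = u"
| "uc g k (Suc n) u = (if Suc n \<le> k then u else uc g k n (g (Suc n) u))"

lemma uc_self: "n \<le> k \<Longrightarrow> uc g k n u = u"
  by (induction n arbitrary: u) auto

lemma uc_step: "k < n \<Longrightarrow> uc g k n u = g (Suc k) (uc g (Suc k) n u)"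
proof (induction n arbitrary: u)
  case 0 then show ?case by simp
next
  case (Suc n)
  show ?case
  proof (cases "k = n")
    case True then show ?thesis by (simp add: uc_self)
  next
    case False
    then have "k < n" using Suc by simp
    then show ?thesis using Suc by simp
  qed
qed

lemma uc_shift: "k \<le> n \<Longrightarrow> uc g k (Suc n) u = uc g k n (g (Suc n) u)"
  by simp


locale bpa =
  fixes \<rho> a b m q :: "nat \<Rightarrow> real" and g h :: "nat \<Rightarrow> real \<Rightarrow> real" and c lam :: real
  assumes rho_nn: "\<And>k. k \<ge> 1 \<Longrightarrow> 0 \<le> \<rho> k"
    and rho_lt: "\<And>k. k \<ge> 1 \<Longrightarrow> \<rho> k < 1"
    and b_nn: "\<And>k. k \<ge> 1 \<Longrightarrow> 0 \<le> b k"
    and m_nn: "\<And>k. k \<ge> 1 \<Longrightarrow> 0 \<le> m k"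
    and g_nn: "\<And>k u. k \<ge> 1 \<Longrightarrow> 0 \<le> u \<Longrightarrow> u \<le> 1 \<Longrightarrow> 0 \<le> g k u"
    and g_le: "\<And>k u. k \<ge> 1 \<Longrightarrow> 0 \<le> u \<Longrightarrow> u \<le> 1 \<Longrightarrow> g k u \<le> \<rho> k * u"
    and g_lo: "\<And>k u. k \<ge> 1 \<Longrightarrow> 0 \<le> u \<Longrightarrow> u \<le> 1 \<Longrightarrow> \<rho> k * u - a k * u^2 \<le> g k u"
    and g_up: "\<And>k u. k \<ge> 1 \<Longrightarrow> 0 \<le> u \<Longrightarrow> u \<le> 1 \<Longrightarrow> g k u \<le> \<rho> k * u - a k * u^2 + b k * u^3"
    and h_nn: "\<And>k v. k \<ge> 1 \<Longrightarrow> 0 \<le> v \<Longrightarrow> v \<le> 1 \<Longrightarrow> 0 \<le> h k v"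
    and h_le1: "\<And>k v. k \<ge> 1 \<Longrightarrow> 0 \<le> v \<Longrightarrow> v \<le> 1 \<Longrightarrow> h k v \<le> 1"
    and h_lo: "\<And>k v. k \<ge> 1 \<Longrightarrow> 0 \<le> v \<Longrightarrow> v \<le> 1 \<Longrightarrow> 1 - m k * v \<le> h k v"
    and h_up: "\<And>k v. k \<ge> 1 \<Longrightarrow> 0 \<le> v \<Longrightarrow> v \<le> 1 \<Longrightarrow> h k v \<le> 1 - m k * v + q k * v^2"
    and lim_a: "(\<lambda>k. a k / (1 - \<rho> k)) \<longlonglongrightarrow> c"
    and lim_b: "(\<lambda>k. b k / (1 - \<rho> k)) \<longlonglongrightarrow> 0"
    and lim_m: "(\<lambda>k. m k / (1 - \<rho> k)) \<longlonglongrightarrow> lam"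
    and lim_q: "(\<lambda>k. q k / (1 - \<rho> k)) \<longlonglongrightarrow> 0"
    and lim_rho: "\<rho> \<longlonglongrightarrow> 1"
    and rho_div: "\<not> summable (\<lambda>k. 1 - \<rho> k)"
    and c_pos: "0 < c" and lam_nn: "0 \<le> lam"
begin

definition e :: "nat \<Rightarrow> real" where "e k = 1 - \<rho> k"

definition pi :: "nat \<Rightarrow> nat \<Rightarrow> real" where "pi k n = (\<Prod>i\<in>{k<..n}. \<rho> i)"

lemma e_pos: "k \<ge> 1 \<Longrightarrow> 0 < e k" using rho_lt[of k] by (simp add: e_def)
lemma e_le1: "k \<ge> 1 \<Longrightarrow> e k \<le> 1" using rho_nn[of k] by (simp add: e_def)

lemma uc_range: "0 \<le> u \<Longrightarrow> u \<le> 1 \<Longrightarrow> 0 \<le> uc g k n u \<and> uc g k n u \<le> u"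
proof (induction n arbitrary: u)
  case 0 then show ?case by simp
next
  case (Suc n)
  have "0 \<le> g (Suc n) u" "g (Suc n) u \<le> u"
    using g_nn[of "Suc n" u] g_le[of "Suc n" u] rho_nn[of "Suc n"] rho_lt[of "Suc n"] Suc.prems
    by (auto intro: order_trans[OF _ mult_left_le_one_le[of u "\<rho> (Suc n)"]])
  then show ?case using Suc.IH[of "g (Suc n) u"] Suc.prems by auto
qed

lemma uc_mono: assumes "0 \<le> u" "u \<le> 1" "j \<le> k" "k \<le> n" shows "uc g j n u \<le> uc g k n u"
proof -
  have "k \<le> n \<longrightarrow> uc g j n u \<le> uc g k n u"
    using assms(3)
  proof (induction k rule: dec_induct)
    case base then show ?case by simp
  next
    case (step k)
    show ?case
    proof
      assume kn: "Suc k \<le> n"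
      have r: "0 \<le> uc g (Suc k) n u" "uc g (Suc k) n u \<le> 1" using uc_range[of u "Suc k" n] assms by auto
      have "uc g k n u = g (Suc k) (uc g (Suc k) n u)" using kn by (intro uc_step) auto
      also have "\<dots> \<le> \<rho> (Suc k) * uc g (Suc k) n u" using g_le[of "Suc k", OF _ r] by simp
      also have "\<dots> \<le> uc g (Suc k) n u"
        using rho_nn[of "Suc k"] rho_lt[of "Suc k"] r by (intro mult_left_le_one_le) auto
      finally show "uc g j n u \<le> uc g (Suc k) n u" using step kn by simp
    qed
  qed
  then show ?thesis using assms by simp
qed

lemma pi_nn: "0 \<le> pi k n" unfolding pi_def by (intro prod_nonneg) (auto intro: rho_nn)
lemma pi_le1: "pi k n \<le> 1" unfolding pi_def
  by (intro prod_le_1) (auto intro: rho_nn less_imp_le[OF rho_lt])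
lemma pi_self: "pi n n = 1" unfolding pi_def by simp
lemma pi_step: "k < n \<Longrightarrow> pi k n = \<rho> (Suc k) * pi (Suc k) n"
proof -
  assume "k < n"
  then have "{k<..n} = insert (Suc k) {Suc k<..n}" by auto
  then show ?thesis unfolding pi_def by simp
qed

lemma pi_le_exp: "pi K n \<le> exp (- (\<Sum>i\<in>{K<..n}. e i))"
proof -
  have "pi K n \<le> (\<Prod>i\<in>{K<..n}. exp (- e i))"
    unfolding pi_def
  proof (intro prod_mono conjI)
    fix i assume "i \<in> {K<..n}"
    then have "i \<ge> 1" by auto
    then show "0 \<le> \<rho> i" by (rule rho_nn)
    show "\<rho> i \<le> exp (- e i)" using exp_ge_add_one_self[of "- e i"] by (simp add: e_def)
  qed
  also have "\<dots> = exp (\<Sum>i\<in>{K<..n}. - e i)" by (simp add: exp_sum)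
  finally show ?thesis by (simp add: sum_negf)
qed

lemma pi_lim: "(\<lambda>n. pi K n) \<longlonglongrightarrow> 0"
proof -
  define S where "S n = (\<Sum>i<n. e (Suc i))" for n
  have enn: "0 \<le> e (Suc k)" for k using e_pos[of "Suc k"] by simp
  have nsum: "\<not> summable (\<lambda>k. e (Suc k))"
    using rho_div summable_Suc_iff[of "\<lambda>k. e k"] by (simp add: e_def)
  have unb: "\<exists>N. S N > B" for B
  proof (rule ccontr)
    assume "\<not> ?thesis"
    then have "S N \<le> B" for N by (meson not_less)
    then have "summable (\<lambda>k. e (Suc k))" using enn
      by (intro summableI_nonneg_bounded[where x=B]) (auto simp: S_def)
    with nsum show False by simp
  qed
  have Smono: "S N \<le> S n" if "N \<le> n" for N n
    unfolding S_def using that enn by (intro sum_mono2) auto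
  have Sdiff: "(\<Sum>i\<in>{K<..n}. e i) = S n - S K" if "K \<le> n" for n
  proof -
    have "{K<..n} = Suc ` {K..<n}" by (auto simp: image_iff)
    moreover have "(\<Sum>i\<in>Suc ` {K..<n}. e i) = (\<Sum>i\<in>{K..<n}. e (Suc i))"
      by (subst sum.reindex) auto
    ultimately have "(\<Sum>i\<in>{K<..n}. e i) = (\<Sum>i\<in>{K..<n}. e (Suc i))" by simp
    also have "\<dots> = S n - S K" unfolding S_def using that
      by (metis add_diff_cancel_left' lessThan_atLeast0 sum.atLeastLessThan_concat zero_le)
    finally show ?thesis .
  qed
  show ?thesis
    unfolding LIMSEQ_iff
  proof (intro allI impI)
    fix r :: real assume r: "0 < r"
    obtain N where N: "S N > S K - ln r" using unb by blast
    show "\<exists>no. \<forall>n\<ge>no. norm (pi K n - 0) < r"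
    proof (intro exI[of _ "max N K"] allI impI)
      fix n assume n: "max N K \<le> n"
      have "pi K n \<le> exp (- (S n - S K))" using pi_le_exp[of K n] Sdiff[of n] n by simp
      also have "\<dots> \<le> exp (- (S N - S K))" using Smono[of N n] n by simp
      also have "\<dots> < exp (ln r)" using N by simp
      also have "\<dots> = r" using r by simp
      finally show "norm (pi K n - 0) < r" using pi_nn[of K n] by simp
    qed
  qed
qed

end


lemma ln_diff_bounds:
  fixes y z :: real
  assumes "0 < y" "y \<le> z"
  shows "(z-y)/z \<le> ln z - ln y" "ln z - ln y \<le> (z-y)/y"
proof -
  have z: "0 < z" using assms by simp
  have "ln (z/y) \<le> z/y - 1" using assms z by (intro ln_le_minus_one) simp
  then show "ln z - ln y \<le> (z-y)/y" using assms z by (simp add: ln_div diff_divide_distrib)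
  have "ln (y/z) \<le> y/z - 1" using assms z by (intro ln_le_minus_one) simp
  then show "(z-y)/z \<le> ln z - ln y" using assms z by (simp add: ln_div diff_divide_distrib)
qed

lemma sum_gAt_reindex: "(\<Sum>k\<in>{K<..n}. F k) = (\<Sum>j\<in>{K..<n}. F (Suc j))" for F :: "nat \<Rightarrow> real"
proof -
  have "{K<..n} = Suc ` {K..<n}" by (auto simp: image_iff)
  moreover have "(\<Sum>i\<in>Suc ` {K..<n}. F i) = (\<Sum>i\<in>{K..<n}. F (Suc i))"
    by (subst sum.reindex) auto
  ultimately show ?thesis by simp
qed

lemma mono_frac: fixes \<alpha> t s :: real
  assumes "0 \<le> \<alpha>" "0 \<le> t" "t \<le> s" shows "t / (1 + \<alpha> * t) \<le> s / (1 + \<alpha> * s)"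
proof -
  have p1: "0 < 1 + \<alpha> * t" "0 < 1 + \<alpha> * s" using assms by (auto intro: add_pos_nonneg)
  have "t * (1 + \<alpha> * s) \<le> s * (1 + \<alpha> * t)" using assms by (simp add: algebra_simps)
  then show ?thesis using p1 by (simp add: divide_simps)
qed

context bpa begin

definition UU :: "real \<Rightarrow> real \<Rightarrow> nat \<Rightarrow> nat \<Rightarrow> real" where
  "UU \<beta> u k n = u * pi k n / (1 + \<beta> * u * (1 - pi k n))"

definition TT :: "real \<Rightarrow> real \<Rightarrow> nat \<Rightarrow> nat \<Rightarrow> real" where
  "TT \<beta> u k n = ln (1 + \<beta> * u * (1 - pi k n))"

lemma den_ge1: "0 \<le> \<beta> \<Longrightarrow> 0 \<le> u \<Longrightarrow> 1 \<le> 1 + \<beta> * u * (1 - pi k n)"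
  using pi_le1[of k n] by simp

lemma UU_nn: "0 \<le> \<beta> \<Longrightarrow> 0 \<le> u \<Longrightarrow> 0 \<le> UU \<beta> u k n"
  unfolding UU_def using den_ge1[of \<beta> u k n] pi_nn[of k n] by simp

lemma UU_le: "0 \<le> \<beta> \<Longrightarrow> 0 \<le> u \<Longrightarrow> UU \<beta> u k n \<le> u * pi k n"
  unfolding UU_def using den_ge1[of \<beta> u k n] pi_nn[of k n]
  by (metis div_by_1 divide_left_mono mult_nonneg_nonneg mult_pos_pos zero_less_one order_less_le_trans)

lemma UU_self: "UU \<beta> u n n = u" unfolding UU_def by (simp add: pi_self)

lemma UU_rec:
  assumes "0 \<le> \<beta>" "0 \<le> u" "k < n"
  shows "UU \<beta> u k n = \<rho> (Suc k) * UU \<beta> u (Suc k) n / (1 + \<beta> * e (Suc k) * UU \<beta> u (Suc k) n)"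
proof -
  define p where "p = pi (Suc k) n"
  define r where "r = \<rho> (Suc k)"
  have pk: "pi k n = r * p" using pi_step[OF assms(3)] by (simp add: p_def r_def)
  have r: "0 \<le> r" "r \<le> 1" using rho_nn[of "Suc k"] rho_lt[of "Suc k"] by (auto simp: r_def)
  have p: "0 \<le> p" "p \<le> 1" using pi_nn pi_le1 by (auto simp: p_def)
  define D where "D = 1 + \<beta> * u * (1 - p)"
  have D: "0 < D" using den_ge1[of \<beta> u "Suc k" n] assms by (simp add: D_def p_def)
  have D2: "0 < D + \<beta> * (1 - r) * (u * p)" using D assms r p by (intro add_pos_nonneg) auto
  have "\<rho> (Suc k) * UU \<beta> u (Suc k) n / (1 + \<beta> * e (Suc k) * UU \<beta> u (Suc k) n)
      = r * (u * p / D) / (1 + \<beta> * (1 - r) * (u * p / D))"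
    by (simp add: UU_def e_def r_def p_def D_def)
  also have "\<dots> = r * u * p / (D + \<beta> * (1 - r) * (u * p))"
    using D D2 by (simp add: field_simps)
  also have "\<dots> = UU \<beta> u k n"
    unfolding UU_def pk D_def by (simp add: algebra_simps)
  finally show ?thesis by simp
qed

lemma sandwich_up:
  assumes "0 \<le> \<beta>" "0 \<le> u" "u \<le> 1" "K \<le> k" "k \<le> n"
    and comp: "\<And>k v. K < k \<Longrightarrow> k \<le> n \<Longrightarrow> 0 \<le> v \<Longrightarrow> v \<le> 1 \<Longrightarrow> g k v \<le> \<rho> k * v / (1 + \<beta> * e k * v)"
  shows "uc g k n u \<le> UU \<beta> u k n"
  using assms(5)
proof (induction k rule: inc_induct)
  case base then show ?case by (simp add: uc_self UU_self)
next
  case (step j)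
  define v where "v = uc g (Suc j) n u"
  have v: "0 \<le> v" "v \<le> 1" using uc_range[of u "Suc j" n] assms by (auto simp: v_def)
  have rr: "0 \<le> \<rho> (Suc j)" "0 \<le> e (Suc j)" using rho_nn[of "Suc j"] e_pos[of "Suc j"] by auto
  have "uc g j n u = g (Suc j) v" using step by (simp add: uc_step v_def)
  also have "\<dots> \<le> \<rho> (Suc j) * v / (1 + \<beta> * e (Suc j) * v)"
    using comp[of "Suc j" v] v step assms by auto
  also have "\<dots> = \<rho> (Suc j) * (v / (1 + (\<beta> * e (Suc j)) * v))" by simp
  also have "\<dots> \<le> \<rho> (Suc j) * (UU \<beta> u (Suc j) n / (1 + (\<beta> * e (Suc j)) * UU \<beta> u (Suc j) n))"
    using step v rr assms by (intro mult_left_mono mono_frac) (auto simp: v_def)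
  also have "\<dots> = UU \<beta> u j n" using UU_rec[of \<beta> u j n] step assms by simp
  finally show ?case .
qed

lemma sandwich_lo:
  assumes "0 \<le> \<beta>" "0 \<le> u" "u \<le> 1" "K \<le> k" "k \<le> n"
    and comp: "\<And>k v. K < k \<Longrightarrow> k \<le> n \<Longrightarrow> 0 \<le> v \<Longrightarrow> v \<le> 1 \<Longrightarrow> \<rho> k * v / (1 + \<beta> * e k * v) \<le> g k v"
  shows "UU \<beta> u k n \<le> uc g k n u"
  using assms(5)
proof (induction k rule: inc_induct)
  case base then show ?case by (simp add: uc_self UU_self)
next
  case (step j)
  define v where "v = uc g (Suc j) n u"
  have v: "0 \<le> v" "v \<le> 1" using uc_range[of u "Suc j" n] assms by (auto simp: v_def)
  have rr: "0 \<le> \<rho> (Suc j)" "0 \<le> e (Suc j)" using rho_nn[of "Suc j"] e_pos[of "Suc j"] by auto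
  have "UU \<beta> u j n = \<rho> (Suc j) * (UU \<beta> u (Suc j) n / (1 + (\<beta> * e (Suc j)) * UU \<beta> u (Suc j) n))"
    using UU_rec[of \<beta> u j n] step assms by simp
  also have "\<dots> \<le> \<rho> (Suc j) * (v / (1 + (\<beta> * e (Suc j)) * v))"
    using step v rr assms UU_nn[of \<beta> u "Suc j" n] by (intro mult_left_mono mono_frac) (auto simp: v_def)
  also have "\<dots> = \<rho> (Suc j) * v / (1 + \<beta> * e (Suc j) * v)" by simp
  also have "\<dots> \<le> g (Suc j) v"
    using comp[of "Suc j" v] v step assms by auto
  also have "\<dots> = uc g j n u" using step by (simp add: uc_step v_def)
  finally show ?case .
qed

lemma comp_up:
  assumes "k \<ge> 1" "0 \<le> \<beta>" "\<beta> * e k \<le> a k - b k" "0 \<le> v" "v \<le> 1"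
  shows "g k v \<le> \<rho> k * v / (1 + \<beta> * e k * v)"
proof -
  have r: "0 \<le> \<rho> k" "\<rho> k \<le> 1" using rho_nn rho_lt assms by (auto simp: less_imp_le)
  have ek: "0 \<le> e k" using e_pos assms by force
  define t where "t = \<beta> * e k * v"
  have t: "0 \<le> t" using assms ek by (simp add: t_def)
  have bv: "b k * v^3 \<le> b k * v^2" using b_nn[OF assms(1)] assms
    by (intro mult_left_mono) (auto simp: power_decreasing)
  have "g k v \<le> \<rho> k * v - a k * v^2 + b k * v^3" by (rule g_up) (use assms in auto)
  also have "\<dots> \<le> \<rho> k * v - (a k - b k) * v^2" using bv by (simp add: algebra_simps)
  also have "\<dots> \<le> \<rho> k * v - \<beta> * e k * v^2" using assms by (intro diff_left_mono mult_right_mono) auto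
  also have "\<dots> \<le> \<rho> k * v - \<rho> k * (\<beta> * e k * v^2)"
    using r assms ek by (intro diff_left_mono mult_left_le_one_le) auto
  also have "\<dots> = (\<rho> k * v) * (1 - t)" by (simp add: t_def power2_eq_square algebra_simps)
  also have "\<dots> \<le> \<rho> k * v / (1 + t)"
  proof -
    have "(\<rho> k * v) * (1 - t) * (1 + t) \<le> \<rho> k * v"
      using r assms t by (simp add: algebra_simps mult_nonneg_nonneg)
    then show ?thesis using t by (simp add: divide_simps)
  qed
  finally show ?thesis by (simp add: t_def)
qed

lemma comp_lo:
  assumes "k \<ge> 1" "0 \<le> \<beta>" "a k \<le> \<rho> k * \<beta> * e k * (1 - \<beta> * e k)" "0 \<le> v" "v \<le> 1"
  shows "\<rho> k * v / (1 + \<beta> * e k * v) \<le> g k v"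
proof -
  have r: "0 \<le> \<rho> k" "\<rho> k \<le> 1" using rho_nn rho_lt assms by (auto simp: less_imp_le)
  have ek: "0 \<le> e k" using e_pos assms by force
  define t where "t = \<beta> * e k * v"
  have t: "0 \<le> t" using assms ek by (simp add: t_def)
  have "\<rho> k * v / (1 + t) \<le> \<rho> k * v * (1 - t + t^2)"
  proof -
    have "1 \<le> (1 - t + t^2) * (1 + t)" using t by (simp add: algebra_simps power2_eq_square power3_eq_cube[symmetric])
    then have "\<rho> k * v \<le> \<rho> k * v * (1 - t + t^2) * (1 + t)"
      using r assms mult_left_mono[of 1 "(1 - t + t^2) * (1 + t)" "\<rho> k * v"] by (simp add: mult.assoc)
    then show ?thesis using t by (simp add: divide_simps)
  qed
  also have "\<dots> = \<rho> k * v - \<rho> k * \<beta> * e k * v^2 + \<rho> k * (\<beta> * e k)^2 * v^3"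
    by (simp add: t_def power2_eq_square power3_eq_cube algebra_simps)
  also have "\<dots> \<le> \<rho> k * v - \<rho> k * \<beta> * e k * v^2 + \<rho> k * (\<beta> * e k)^2 * v^2"
    using assms r by (intro add_left_mono mult_left_mono) (auto simp: power_decreasing)
  also have "\<dots> = \<rho> k * v - (\<rho> k * \<beta> * e k * (1 - \<beta> * e k)) * v^2"
    by (simp add: power2_eq_square algebra_simps)
  also have "\<dots> \<le> \<rho> k * v - a k * v^2"
    using assms by (intro diff_left_mono mult_right_mono) auto
  also have "\<dots> \<le> g k v" by (rule g_lo) (use assms in auto)
  finally show ?thesis by (simp add: t_def)
qed

lemma T_step:
  assumes "0 < \<beta>" "0 \<le> u" "u \<le> 1" "j < n"
  shows "0 \<le> TT \<beta> u j n - TT \<beta> u (Suc j) n"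
    "(TT \<beta> u j n - TT \<beta> u (Suc j) n) / \<beta> \<le> e (Suc j) * UU \<beta> u (Suc j) n"
    "e (Suc j) * UU \<beta> u (Suc j) n \<le> (1 + \<beta> * e (Suc j)) / \<beta> * (TT \<beta> u j n - TT \<beta> u (Suc j) n)"
proof -
  define p where "p = pi (Suc j) n"
  define r where "r = \<rho> (Suc j)"
  have pk: "pi j n = r * p" using pi_step[OF assms(4)] by (simp add: p_def r_def)
  have r: "0 \<le> r" "r \<le> 1" using rho_nn[of "Suc j"] rho_lt[of "Suc j"] by (auto simp: r_def)
  have p: "0 \<le> p" "p \<le> 1" using pi_nn pi_le1 by (auto simp: p_def)
  define y where "y = 1 + \<beta> * u * (1 - p)"
  define z where "z = 1 + \<beta> * u * (1 - r * p)"
  have y1: "1 \<le> y" using assms p by (simp add: y_def)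
  have zy: "z - y = \<beta> * u * p * (1 - r)" by (simp add: y_def z_def algebra_simps)
  have zy0: "0 \<le> z - y" unfolding zy using assms p r by simp
  have yz: "y \<le> z" using zy0 by simp
  have T: "TT \<beta> u j n - TT \<beta> u (Suc j) n = ln z - ln y"
    by (simp add: TT_def pk y_def z_def p_def)
  have "e (Suc j) * UU \<beta> u (Suc j) n = (1 - r) * (u * p / y)" by (simp add: UU_def e_def r_def p_def y_def)
  also have "\<dots> = (z - y) / (\<beta> * y)" using assms y1 unfolding zy by (simp add: field_simps)
  finally have EU: "e (Suc j) * UU \<beta> u (Suc j) n = (z - y) / (\<beta> * y)" .
  note lb = ln_diff_bounds[of y z]
  have l0: "0 \<le> ln z - ln y" using lb y1 yz zy0 by (smt (verit) divide_nonneg_pos)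
  show "0 \<le> TT \<beta> u j n - TT \<beta> u (Suc j) n" using l0 T by simp
  show "(TT \<beta> u j n - TT \<beta> u (Suc j) n) / \<beta> \<le> e (Suc j) * UU \<beta> u (Suc j) n"
    unfolding T EU using lb(2) y1 yz assms by (simp add: divide_simps mult.commute)
  have z0: "0 < z" using y1 yz by simp
  have "(z - y) / (\<beta> * y) = (z / y) * ((z - y) / z) / \<beta>" using y1 z0 assms by (simp add: field_simps)
  also have "\<dots> \<le> (z / y) * (ln z - ln y) / \<beta>"
    using lb(1) y1 yz assms by (intro divide_right_mono mult_left_mono) auto
  also have "\<dots> \<le> (1 + \<beta> * e (Suc j)) * (ln z - ln y) / \<beta>"
  proof -
    have "z / y = 1 + (z - y) / y" using y1 by (simp add: field_simps)
    also have "\<dots> \<le> 1 + (z - y)" using y1 zy0 by (simp add: divide_le_eq mult_le_cancel_left1 mult_right_le_one_le)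
    also have "\<dots> \<le> 1 + \<beta> * e (Suc j)"
    proof -
      have "u * p * (1 - r) \<le> 1 * 1 * (1 - r)" using assms p r by (intro mult_mono) auto
      then show ?thesis unfolding zy using assms by (simp add: e_def r_def mult.assoc)
    qed
    finally show ?thesis using l0 assms by (intro divide_right_mono mult_right_mono) auto
  qed
  finally show "e (Suc j) * UU \<beta> u (Suc j) n \<le> (1 + \<beta> * e (Suc j)) / \<beta> * (TT \<beta> u j n - TT \<beta> u (Suc j) n)"
    unfolding T EU by simp
qed

lemma TT_tele: "K \<le> n \<Longrightarrow> (\<Sum>j\<in>{K..<n}. TT \<beta> u j n - TT \<beta> u (Suc j) n) = TT \<beta> u K n"
proof -
  assume "K \<le> n"
  then have "(\<Sum>j\<in>{K..<n}. TT \<beta> u (Suc j) n - TT \<beta> u j n) = TT \<beta> u n n - TT \<beta> u K n"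
    by (rule sum_Suc_diff')
  moreover have "TT \<beta> u n n = 0" by (simp add: TT_def pi_self)
  ultimately show ?thesis by (simp add: sum_subtractf)
qed

lemma sumUU_lo:
  assumes "0 < \<beta>" "0 \<le> u" "u \<le> 1" "K \<le> n"
  shows "ln (1 + \<beta> * u * (1 - pi K n)) / \<beta> \<le> (\<Sum>k\<in>{K<..n}. e k * UU \<beta> u k n)"
proof -
  have "ln (1 + \<beta> * u * (1 - pi K n)) / \<beta> = (\<Sum>j\<in>{K..<n}. (TT \<beta> u j n - TT \<beta> u (Suc j) n) / \<beta>)"
    using TT_tele[OF assms(4), of \<beta> u] by (simp add: TT_def sum_divide_distrib[symmetric])
  also have "\<dots> \<le> (\<Sum>j\<in>{K..<n}. e (Suc j) * UU \<beta> u (Suc j) n)"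
    using T_step assms by (intro sum_mono) auto
  also have "\<dots> = (\<Sum>k\<in>{K<..n}. e k * UU \<beta> u k n)" by (simp add: sum_gAt_reindex)
  finally show ?thesis .
qed

lemma sumUU_up:
  assumes "0 < \<beta>" "0 \<le> u" "u \<le> 1" "K \<le> n" "0 \<le> \<delta>"
    and ed: "\<And>k. K < k \<Longrightarrow> k \<le> n \<Longrightarrow> e k \<le> \<delta>"
  shows "(\<Sum>k\<in>{K<..n}. e k * UU \<beta> u k n) \<le> (1 + \<beta> * \<delta>) / \<beta> * ln (1 + \<beta> * u)"
proof -
  have "(\<Sum>k\<in>{K<..n}. e k * UU \<beta> u k n) = (\<Sum>j\<in>{K..<n}. e (Suc j) * UU \<beta> u (Suc j) n)"
    by (simp add: sum_gAt_reindex)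
  also have "\<dots> \<le> (\<Sum>j\<in>{K..<n}. (1 + \<beta> * \<delta>) / \<beta> * (TT \<beta> u j n - TT \<beta> u (Suc j) n))"
  proof (intro sum_mono)
    fix j assume j: "j \<in> {K..<n}"
    have "e (Suc j) * UU \<beta> u (Suc j) n \<le> (1 + \<beta> * e (Suc j)) / \<beta> * (TT \<beta> u j n - TT \<beta> u (Suc j) n)"
      using T_step(3)[of \<beta> u j n] assms j by auto
    also have "\<dots> \<le> (1 + \<beta> * \<delta>) / \<beta> * (TT \<beta> u j n - TT \<beta> u (Suc j) n)"
      using T_step(1)[of \<beta> u j n] assms j ed[of "Suc j"]
      by (intro mult_right_mono divide_right_mono) auto
    finally show "e (Suc j) * UU \<beta> u (Suc j) n \<le> (1 + \<beta> * \<delta>) / \<beta> * (TT \<beta> u j n - TT \<beta> u (Suc j) n)" .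
  qed
  also have "\<dots> = (1 + \<beta> * \<delta>) / \<beta> * TT \<beta> u K n"
    unfolding sum_distrib_left[symmetric] using TT_tele[OF assms(4), of \<beta> u] by simp
  also have "\<dots> \<le> (1 + \<beta> * \<delta>) / \<beta> * ln (1 + \<beta> * u)"
  proof -
    have "TT \<beta> u K n \<le> ln (1 + \<beta> * u)" unfolding TT_def
      using assms pi_nn[of K n] pi_le1[of K n]
      by (subst ln_le_cancel_iff) (auto intro: add_pos_nonneg mult_nonneg_nonneg simp: mult_right_le_one_le)
    then show ?thesis using assms by (intro mult_left_mono) auto
  qed
  finally show ?thesis .
qed

end


lemma prod_ge_1_minus_sum:
  fixes f t :: "'i \<Rightarrow> real"
  assumes "finite A" "\<And>k. k \<in> A \<Longrightarrow> 0 \<le> f k \<and> f k \<le> 1 \<and> 1 - t k \<le> f k \<and> 0 \<le> t k"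
  shows "1 - sum t A \<le> prod f A"
  using assms
proof (induction A rule: finite_induct)
  case empty then show ?case by simp
next
  case (insert x F)
  have IH: "1 - sum t F \<le> prod f F" using insert by auto
  have p: "0 \<le> prod f F" "prod f F \<le> 1" using insert by (auto intro: prod_nonneg prod_le_1)
  have fx: "0 \<le> f x" "1 - t x \<le> f x" "0 \<le> t x" using insert by auto
  have "(1 - t x) * prod f F \<le> f x * prod f F" using fx p by (intro mult_right_mono) auto
  moreover have "t x * prod f F \<le> t x" using fx p by (simp add: mult_left_le)
  ultimately have "prod f F - t x \<le> f x * prod f F" by (simp add: algebra_simps)
  then show ?case using insert IH by simp
qed

lemma prod_le_exp_sum:
  fixes f s :: "'i \<Rightarrow> real"
  assumes "finite A" "\<And>k. k \<in> A \<Longrightarrow> 0 \<le> f k \<and> f k \<le> exp (s k)"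
  shows "prod f A \<le> exp (sum s A)"
proof -
  have "prod f A \<le> (\<Prod>k\<in>A. exp (s k))" using assms by (intro prod_mono) auto
  then show ?thesis using assms by (simp add: exp_sum)
qed

lemma prod_ge_exp_sum:
  fixes f s :: "'i \<Rightarrow> real"
  assumes "finite A" "\<And>k. k \<in> A \<Longrightarrow> exp (s k) \<le> f k"
  shows "exp (sum s A) \<le> prod f A"
proof -
  have "(\<Prod>k\<in>A. exp (s k)) \<le> prod f A" using assms by (intro prod_mono) (auto intro: less_imp_le)
  then show ?thesis using assms by (simp add: exp_sum)
qed

lemma one_minus_ge_exp:
  fixes t :: real assumes "0 \<le> t" "t \<le> 1/2"
  shows "exp (- t - 2 * t^2) \<le> 1 - t"
proof -
  have "- t - 2 * t^2 \<le> ln (1 - t)" by (rule ln_one_minus_pos_lower_bound) (use assms in auto)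
  then have "exp (- t - 2 * t^2) \<le> exp (ln (1 - t))" by simp
  also have "\<dots> = 1 - t" using assms by simp
  finally show ?thesis .
qed

context bpa begin

definition PP :: "real \<Rightarrow> nat \<Rightarrow> real" where
  "PP u n = (\<Prod>k\<in>{1..n}. h k (uc g k n u))"

lemma ev_good:
  assumes "0 < \<delta>" "\<delta> < c"
  shows "eventually (\<lambda>k. 1 \<le> k \<and> e k \<le> \<delta> \<and> (lam + \<delta>) * e k \<le> 1/2
      \<and> (c - \<delta>) * e k \<le> a k - b k \<and> a k \<le> \<rho> k * (c + \<delta>) * e k * (1 - (c + \<delta>) * e k)
      \<and> (lam - \<delta>) * e k \<le> m k \<and> m k \<le> (lam + \<delta>) * e k \<and> q k \<le> \<delta> * e k) sequentially"
proof -
  have e0: "e \<longlonglongrightarrow> 0" using tendsto_diff[OF tendsto_const[of 1] lim_rho] by (simp add: e_def[abs_def])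
  have ev1: "eventually (\<lambda>k. e k < \<delta>) sequentially" using order_tendstoD(2)[OF e0] assms by simp
  have "(\<lambda>k. (lam + \<delta>) * e k) \<longlonglongrightarrow> (lam + \<delta>) * 0" by (intro tendsto_intros e0)
  then have ev2: "eventually (\<lambda>k. (lam + \<delta>) * e k < 1/2) sequentially" by (intro order_tendstoD(2)) auto
  have "(\<lambda>k. a k / (1 - \<rho> k) - b k / (1 - \<rho> k)) \<longlonglongrightarrow> c - 0" by (intro tendsto_intros lim_a lim_b)
  then have ev3: "eventually (\<lambda>k. c - \<delta> < a k / e k - b k / e k) sequentially"
    using assms unfolding e_def by (intro order_tendstoD(1)) auto
  have "(\<lambda>k. \<rho> k * (c + \<delta>) * (1 - (c + \<delta>) * e k) - a k / (1 - \<rho> k)) \<longlonglongrightarrow> 1 * (c + \<delta>) * (1 - (c + \<delta>) * 0) - c"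
    by (intro tendsto_intros lim_rho e0 lim_a)
  then have ev4: "eventually (\<lambda>k. 0 < \<rho> k * (c + \<delta>) * (1 - (c + \<delta>) * e k) - a k / e k) sequentially"
    using assms unfolding e_def by (intro order_tendstoD(1)) auto
  have ev5: "eventually (\<lambda>k. lam - \<delta> < m k / e k) sequentially"
    using order_tendstoD(1)[OF lim_m, of "lam - \<delta>"] assms by (simp add: e_def)
  have ev6: "eventually (\<lambda>k. m k / e k < lam + \<delta>) sequentially"
    using order_tendstoD(2)[OF lim_m, of "lam + \<delta>"] assms by (simp add: e_def)
  have ev7: "eventually (\<lambda>k. q k / e k < \<delta>) sequentially"
    using order_tendstoD(2)[OF lim_q, of "\<delta>"] assms by (simp add: e_def)
  have ev0: "eventually (\<lambda>k. 1 \<le> k) sequentially" by (rule eventually_ge_at_top)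
  show ?thesis
    using eventually_conj[OF ev0 eventually_conj[OF ev1 eventually_conj[OF ev2 eventually_conj[OF ev3
      eventually_conj[OF ev4 eventually_conj[OF ev5 eventually_conj[OF ev6 ev7]]]]]]]
  proof (rule eventually_mono)
    fix k assume H: "1 \<le> k \<and> e k < \<delta> \<and> (lam + \<delta>) * e k < 1/2 \<and> c - \<delta> < a k / e k - b k / e k
      \<and> 0 < \<rho> k * (c + \<delta>) * (1 - (c + \<delta>) * e k) - a k / e k \<and> lam - \<delta> < m k / e k
      \<and> m k / e k < lam + \<delta> \<and> q k / e k < \<delta>"
    then have ek: "0 < e k" using e_pos by auto
    have "(c - \<delta>) * e k \<le> (a k / e k - b k / e k) * e k" using H ek by (intro mult_right_mono) auto
    also have "\<dots> = a k - b k" using ek by (simp add: field_simps)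
    finally have 3: "(c - \<delta>) * e k \<le> a k - b k" .
    have "a k = (a k / e k) * e k" using ek by simp
    also have "\<dots> \<le> (\<rho> k * (c + \<delta>) * (1 - (c + \<delta>) * e k)) * e k" using H ek by (intro mult_right_mono) auto
    finally have 4: "a k \<le> \<rho> k * (c + \<delta>) * e k * (1 - (c + \<delta>) * e k)" by (simp add: mult_ac)
    have "(lam - \<delta>) * e k \<le> (m k / e k) * e k" using H ek by (intro mult_right_mono) auto
    then have 5: "(lam - \<delta>) * e k \<le> m k" using ek by simp
    have "(m k / e k) * e k \<le> (lam + \<delta>) * e k" using H ek by (intro mult_right_mono) auto
    then have 6: "m k \<le> (lam + \<delta>) * e k" using ek by simp
    have "(q k / e k) * e k \<le> \<delta> * e k" using H ek by (intro mult_right_mono) auto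
    then have 7: "q k \<le> \<delta> * e k" using ek by simp
    show "1 \<le> k \<and> e k \<le> \<delta> \<and> (lam + \<delta>) * e k \<le> 1/2
      \<and> (c - \<delta>) * e k \<le> a k - b k \<and> a k \<le> \<rho> k * (c + \<delta>) * e k * (1 - (c + \<delta>) * e k)
      \<and> (lam - \<delta>) * e k \<le> m k \<and> m k \<le> (lam + \<delta>) * e k \<and> q k \<le> \<delta> * e k"
      using H 3 4 5 6 7 by auto
  qed
qed

end


context bpa begin

lemma main_delta:
  assumes d: "0 < \<delta>" "\<delta> < c" and u: "0 < u" "u \<le> 1"
  obtains K where "K \<ge> 1"
    "\<And>n. n \<ge> K \<Longrightarrow> PP u n \<le> exp (- lam * (ln (1 + (c+\<delta>) * u * (1 - pi K n)) / (c+\<delta>))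
                + 2 * \<delta> * ((1 + (c-\<delta>) * \<delta>) / (c-\<delta>) * ln (1 + (c-\<delta>) * u)))"
    "\<And>n. n \<ge> K \<Longrightarrow> max 0 (1 - (\<Sum>k\<in>{1..K}. m k) * pi K n)
         * exp (- ((1 + 2 * (lam + \<delta>) * \<delta>) * (lam + \<delta>)) * ((1 + (c-\<delta>) * \<delta>) / (c-\<delta>) * ln (1 + (c-\<delta>) * u)))
         \<le> PP u n"
proof -
  define cm where "cm = c - \<delta>"
  define cp where "cp = c + \<delta>"
  define SU where "SU = (1 + cm * \<delta>) / cm * ln (1 + cm * u)"
  define Lam where "Lam = (1 + 2 * (lam + \<delta>) * \<delta>) * (lam + \<delta>)"
  have cm: "0 < cm" using d by (simp add: cm_def)
  have cp: "0 < cp" using d c_pos by (simp add: cp_def)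
  obtain K0 where K0: "\<And>k. k \<ge> K0 \<Longrightarrow> 1 \<le> k \<and> e k \<le> \<delta> \<and> (lam + \<delta>) * e k \<le> 1/2
      \<and> (c - \<delta>) * e k \<le> a k - b k \<and> a k \<le> \<rho> k * (c + \<delta>) * e k * (1 - (c + \<delta>) * e k)
      \<and> (lam - \<delta>) * e k \<le> m k \<and> m k \<le> (lam + \<delta>) * e k \<and> q k \<le> \<delta> * e k"
    using ev_good[OF d] unfolding eventually_sequentially by blast
  define K where "K = max 1 K0"
  have K1: "K \<ge> 1" by (simp add: K_def)
  have good: "1 \<le> k \<and> e k \<le> \<delta> \<and> (lam + \<delta>) * e k \<le> 1/2
      \<and> cm * e k \<le> a k - b k \<and> a k \<le> \<rho> k * cp * e k * (1 - cp * e k)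
      \<and> (lam - \<delta>) * e k \<le> m k \<and> m k \<le> (lam + \<delta>) * e k \<and> q k \<le> \<delta> * e k" if "K < k" for k
    using K0[of k] that by (auto simp: K_def cm_def cp_def)
  have main: "PP u n \<le> exp (- lam * (ln (1 + cp * u * (1 - pi K n)) / cp) + 2 * \<delta> * SU)
      \<and> max 0 (1 - (\<Sum>k\<in>{1..K}. m k) * pi K n) * exp (- Lam * SU) \<le> PP u n" if n: "n \<ge> K" for n
  proof -
    define v where "v k = uc g k n u" for k
    have v: "0 \<le> v k" "v k \<le> 1" for k using uc_range[of u k n] u by (auto simp: v_def)
    have ek: "k \<ge> 1 \<Longrightarrow> 0 \<le> e k" for k using e_pos[of k] by simp
    have vup: "v k \<le> UU cm u k n" if "K \<le> k" "k \<le> n" for k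
      unfolding v_def
    proof (rule sandwich_up[where K=K])
      fix k' :: nat and v' :: real assume "K < k'" "k' \<le> n" "0 \<le> v'" "v' \<le> 1"
      then show "g k' v' \<le> \<rho> k' * v' / (1 + cm * e k' * v')"
        using good[of k'] cm by (intro comp_up) auto
    qed (use that cm u in auto)
    have vlo: "UU cp u k n \<le> v k" if "K \<le> k" "k \<le> n" for k
      unfolding v_def
    proof (rule sandwich_lo[where K=K])
      fix k' :: nat and v' :: real assume "K < k'" "k' \<le> n" "0 \<le> v'" "v' \<le> 1"
      then show "\<rho> k' * v' / (1 + cp * e k' * v') \<le> g k' v'"
        using good[of k'] cp by (intro comp_lo) (auto simp: mult.assoc)
    qed (use that cp u in auto)
    define S where "S = (\<Sum>k\<in>{K<..n}. e k * v k)"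
    have S_up: "S \<le> SU"
    proof -
      have "S \<le> (\<Sum>k\<in>{K<..n}. e k * UU cm u k n)"
        unfolding S_def using vup ek K1 by (intro sum_mono mult_left_mono) auto
      also have "\<dots> \<le> SU" unfolding SU_def
        using good u cm d n by (intro sumUU_up) auto
      finally show ?thesis .
    qed
    have S_lo: "ln (1 + cp * u * (1 - pi K n)) / cp \<le> S"
    proof -
      have "ln (1 + cp * u * (1 - pi K n)) / cp \<le> (\<Sum>k\<in>{K<..n}. e k * UU cp u k n)"
        using cp u n by (intro sumUU_lo) auto
      also have "\<dots> \<le> S"
        unfolding S_def using vlo ek K1 by (intro sum_mono mult_left_mono) auto
      finally show ?thesis .
    qed
    have S_nn: "0 \<le> S" unfolding S_def using ek v K1 by (intro sum_nonneg mult_nonneg_nonneg) auto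
    have split: "{1..n} = {1..K} \<union> {K<..n}" using n K1 by auto
    have PPs: "PP u n = (\<Prod>k\<in>{1..K}. h k (v k)) * (\<Prod>k\<in>{K<..n}. h k (v k))"
      unfolding PP_def v_def split by (subst prod.union_disjoint) auto
    define H0 where "H0 = (\<Prod>k\<in>{1..K}. h k (v k))"
    define T0 where "T0 = (\<Prod>k\<in>{K<..n}. h k (v k))"
    have H0: "0 \<le> H0" "H0 \<le> 1" unfolding H0_def using h_nn h_le1 v by (auto intro: prod_nonneg prod_le_1)
    have T0nn: "0 \<le> T0" unfolding T0_def using h_nn v K1 by (intro prod_nonneg) auto
    have T0_up: "T0 \<le> exp (- (lam - 2 * \<delta>) * S)"
    proof -
      have "T0 \<le> exp (\<Sum>k\<in>{K<..n}. - (lam - 2 * \<delta>) * (e k * v k))"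
        unfolding T0_def
      proof (intro prod_le_exp_sum conjI)
        fix k assume k: "k \<in> {K<..n}"
        then have gk: "1 \<le> k \<and> e k \<le> \<delta> \<and> (lam - \<delta>) * e k \<le> m k \<and> q k \<le> \<delta> * e k" using good by auto
        have ekk: "0 \<le> e k" using ek gk by auto
        show "0 \<le> h k (v k)" using h_nn v gk by auto
        have "h k (v k) \<le> 1 - m k * v k + q k * (v k)^2" using h_up v gk by auto
        also have "\<dots> \<le> 1 - (lam - \<delta>) * e k * v k + \<delta> * e k * v k"
        proof -
          have "(lam - \<delta>) * e k * v k \<le> m k * v k" using gk v by (intro mult_right_mono) auto
          moreover have "q k * (v k)^2 \<le> \<delta> * e k * v k"
          proof -
            have "q k * (v k)^2 \<le> \<delta> * e k * (v k)^2" using gk by (intro mult_right_mono) auto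
            also have "\<dots> \<le> \<delta> * e k * v k" using v d ekk
              by (intro mult_left_mono) (auto simp: power2_eq_square mult_left_le_one_le)
            finally show ?thesis .
          qed
          ultimately show ?thesis by linarith
        qed
        also have "\<dots> = 1 + (- (lam - 2 * \<delta>) * (e k * v k))" by (simp add: algebra_simps)
        also have "\<dots> \<le> exp (- (lam - 2 * \<delta>) * (e k * v k))" by (rule exp_ge_add_one_self)
        finally show "h k (v k) \<le> exp (- (lam - 2 * \<delta>) * (e k * v k))" .
      qed auto
      also have "\<dots> = exp (- (lam - 2 * \<delta>) * S)" unfolding S_def by (simp add: sum_distrib_left)
      finally show ?thesis .
    qed
    have T0_lo: "exp (- Lam * SU) \<le> T0"
    proof -
      have "exp (\<Sum>k\<in>{K<..n}. - Lam * (e k * v k)) \<le> T0"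
        unfolding T0_def
      proof (intro prod_ge_exp_sum)
        fix k assume k: "k \<in> {K<..n}"
        then have gk: "1 \<le> k \<and> e k \<le> \<delta> \<and> (lam + \<delta>) * e k \<le> 1/2 \<and> m k \<le> (lam + \<delta>) * e k" using good by auto
        have ekk: "0 \<le> e k" using ek gk by auto
        define t where "t = (lam + \<delta>) * (e k * v k)"
        have t0: "0 \<le> t" unfolding t_def using lam_nn d ekk v by auto
        have t1: "t \<le> (lam + \<delta>) * e k" unfolding t_def using lam_nn d ekk v
          by (intro mult_left_mono) (auto simp: mult_right_le_one_le)
        have t2: "t \<le> 1/2" using t1 gk by simp
        have t3: "t \<le> (lam + \<delta>) * \<delta>" using t1 gk lam_nn d by (smt (verit) mult_left_mono)
        have "t^2 \<le> ((lam + \<delta>) * \<delta>) * t" unfolding power2_eq_square using t0 t3 by (intro mult_right_mono) auto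
        then have "- Lam * (e k * v k) \<le> - t - 2 * t^2" unfolding Lam_def t_def by (simp add: algebra_simps)
        then have "exp (- Lam * (e k * v k)) \<le> exp (- t - 2 * t^2)" by simp
        also have "\<dots> \<le> 1 - t" using t0 t2 by (rule one_minus_ge_exp)
        also have "\<dots> \<le> 1 - m k * v k"
          using gk v unfolding t_def by (simp add: mult.assoc[symmetric] mult_right_mono)
        also have "\<dots> \<le> h k (v k)" using h_lo v gk by auto
        finally show "exp (- Lam * (e k * v k)) \<le> h k (v k)" .
      qed auto
      moreover have "(\<Sum>k\<in>{K<..n}. - Lam * (e k * v k)) = - Lam * S" unfolding S_def by (simp add: sum_distrib_left)
      moreover have "- Lam * SU \<le> - Lam * S" using S_up lam_nn d unfolding Lam_def
        by (intro mult_left_mono_neg) (auto intro!: mult_nonneg_nonneg)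
      ultimately show ?thesis by (smt (verit) exp_mono)
    qed
    have H0_lo: "1 - (\<Sum>k\<in>{1..K}. m k) * pi K n \<le> H0"
    proof -
      have "1 - (\<Sum>k\<in>{1..K}. m k * v k) \<le> H0" unfolding H0_def
      proof (rule prod_ge_1_minus_sum)
        fix k assume k: "k \<in> {1..K}"
        show "0 \<le> h k (v k) \<and> h k (v k) \<le> 1 \<and> 1 - m k * v k \<le> h k (v k) \<and> 0 \<le> m k * v k"
          using h_nn h_le1 h_lo m_nn v k by auto
      qed auto
      moreover have "(\<Sum>k\<in>{1..K}. m k * v k) \<le> (\<Sum>k\<in>{1..K}. m k * pi K n)"
      proof (intro sum_mono mult_left_mono)
        fix k assume k: "k \<in> {1..K}"
        show "0 \<le> m k" using m_nn k by auto
        have "v k \<le> v K" unfolding v_def using uc_mono u k n by auto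
        also have "\<dots> \<le> UU cm u K n" using vup n by auto
        also have "\<dots> \<le> u * pi K n" using UU_le cm u by auto
        also have "\<dots> \<le> pi K n" using u pi_nn by (simp add: mult_left_le_one_le)
        finally show "v k \<le> pi K n" .
      qed
      ultimately show ?thesis by (simp add: sum_distrib_right)
    qed
    have up: "PP u n \<le> exp (- lam * (ln (1 + cp * u * (1 - pi K n)) / cp) + 2 * \<delta> * SU)"
    proof -
      have "PP u n \<le> T0" unfolding PPs H0_def[symmetric] T0_def[symmetric]
        using H0 T0nn by (simp add: mult_left_le_one_le)
      also have "\<dots> \<le> exp (- (lam - 2 * \<delta>) * S)" by (rule T0_up)
      also have "\<dots> \<le> exp (- lam * (ln (1 + cp * u * (1 - pi K n)) / cp) + 2 * \<delta> * SU)"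
      proof -
        have "- lam * S \<le> - lam * (ln (1 + cp * u * (1 - pi K n)) / cp)"
          using S_lo lam_nn by (intro mult_left_mono_neg) auto
        moreover have "2 * \<delta> * S \<le> 2 * \<delta> * SU" using S_up d by simp
        ultimately show ?thesis by (simp add: algebra_simps)
      qed
      finally show ?thesis .
    qed
    have lo: "max 0 (1 - (\<Sum>k\<in>{1..K}. m k) * pi K n) * exp (- Lam * SU) \<le> PP u n"
      unfolding PPs H0_def[symmetric] T0_def[symmetric]
      using H0 H0_lo T0_lo by (intro mult_mono) auto
    show ?thesis using up lo by simp
  qed
  show ?thesis
    by (rule that[of K]) (use K1 main in \<open>auto simp: cm_def cp_def SU_def Lam_def\<close>)
qed

end


lemma squeeze_dist:
  fixes P X Y U V L r :: real
  assumes "P \<le> X" "Y \<le> P" "dist X U < r" "dist Y V < r" "dist U L < r" "dist V L < r"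
  shows "dist P L < 2 * r"
  using assms by (auto simp: dist_real_def abs_less_iff)

context bpa begin

lemma PP_lim:
  assumes u: "0 < u" "u \<le> 1"
  shows "(\<lambda>n. PP u n) \<longlonglongrightarrow> exp (- (lam / c) * ln (1 + c * u))"
proof -
  define L where "L = exp (- (lam / c) * ln (1 + c * u))"
  define SU where "SU \<delta> = (1 + (c-\<delta>) * \<delta>) / (c-\<delta>) * ln (1 + (c-\<delta>) * u)" for \<delta>
  define Up where "Up \<delta> = exp (- lam * (ln (1 + (c+\<delta>) * u) / (c+\<delta>)) + 2 * \<delta> * SU \<delta>)" for \<delta>
  define Lo where "Lo \<delta> = exp (- ((1 + 2 * (lam + \<delta>) * \<delta>) * (lam + \<delta>)) * SU \<delta>)" for \<delta>
  have cu: "0 < 1 + c * u" using c_pos u by (simp add: add_pos_nonneg)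
  have "((\<lambda>\<delta>. Up \<delta>) \<longlongrightarrow> exp (- lam * (ln (1 + (c+0) * u) / (c+0)) + 2 * 0 * ((1 + (c-0) * 0) / (c-0) * ln (1 + (c-0) * u)))) (at_right 0)"
    unfolding Up_def SU_def using c_pos cu by (intro tendsto_intros) auto
  then have Up_lim: "(Up \<longlongrightarrow> L) (at_right 0)" by (simp add: L_def)
  have "((\<lambda>\<delta>. Lo \<delta>) \<longlongrightarrow> exp (- ((1 + 2 * (lam + 0) * 0) * (lam + 0)) * ((1 + (c-0) * 0) / (c-0) * ln (1 + (c-0) * u)))) (at_right 0)"
    unfolding Lo_def SU_def using c_pos cu by (intro tendsto_intros) auto
  then have Lo_lim: "(Lo \<longlongrightarrow> L) (at_right 0)" by (simp add: L_def)
  show ?thesis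
    unfolding L_def[symmetric] tendsto_iff
  proof (intro allI impI)
    fix \<epsilon> :: real assume \<epsilon>: "0 < \<epsilon>"
    have evc: "eventually (\<lambda>\<delta>. \<delta> < c) (at_right (0::real))"
      unfolding eventually_at_right_field using c_pos by auto
    have "eventually (\<lambda>\<delta>. dist (Up \<delta>) L < \<epsilon>/2 \<and> dist (Lo \<delta>) L < \<epsilon>/2 \<and> \<delta> < c) (at_right 0)"
      using tendsto_iff[THEN iffD1, OF Up_lim, rule_format, of "\<epsilon>/2"]
        tendsto_iff[THEN iffD1, OF Lo_lim, rule_format, of "\<epsilon>/2"] \<epsilon> evc
      by (intro eventually_conj) auto
    then obtain b where b: "0 < b" "\<And>y. 0 < y \<Longrightarrow> y < b \<Longrightarrow> dist (Up y) L < \<epsilon>/2 \<and> dist (Lo y) L < \<epsilon>/2 \<and> y < c"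
      unfolding eventually_at_right_field by auto
    define \<delta> where "\<delta> = b / 2"
    have d: "0 < \<delta>" "\<delta> < b" using b by (auto simp: \<delta>_def)
    then have dd: "dist (Up \<delta>) L < \<epsilon>/2" "dist (Lo \<delta>) L < \<epsilon>/2" "\<delta> < c" using b by auto
    obtain K where K: "K \<ge> 1"
      "\<And>n. n \<ge> K \<Longrightarrow> PP u n \<le> exp (- lam * (ln (1 + (c+\<delta>) * u * (1 - pi K n)) / (c+\<delta>))
                + 2 * \<delta> * ((1 + (c-\<delta>) * \<delta>) / (c-\<delta>) * ln (1 + (c-\<delta>) * u)))"
      "\<And>n. n \<ge> K \<Longrightarrow> max 0 (1 - (\<Sum>k\<in>{1..K}. m k) * pi K n)
         * exp (- ((1 + 2 * (lam + \<delta>) * \<delta>) * (lam + \<delta>)) * ((1 + (c-\<delta>) * \<delta>) / (c-\<delta>) * ln (1 + (c-\<delta>) * u)))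
         \<le> PP u n"
      using main_delta[OF d(1) dd(3) u] by metis
    have cpu: "0 < 1 + (c+\<delta>) * u" using c_pos d u by (simp add: add_pos_nonneg)
    have "(\<lambda>n. exp (- lam * (ln (1 + (c+\<delta>) * u * (1 - pi K n)) / (c+\<delta>))
                + 2 * \<delta> * ((1 + (c-\<delta>) * \<delta>) / (c-\<delta>) * ln (1 + (c-\<delta>) * u))))
          \<longlonglongrightarrow> exp (- lam * (ln (1 + (c+\<delta>) * u * (1 - 0)) / (c+\<delta>))
                + 2 * \<delta> * ((1 + (c-\<delta>) * \<delta>) / (c-\<delta>) * ln (1 + (c-\<delta>) * u)))"
      using cpu c_pos d by (intro tendsto_intros pi_lim) auto
    then have l1: "(\<lambda>n. exp (- lam * (ln (1 + (c+\<delta>) * u * (1 - pi K n)) / (c+\<delta>))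
                + 2 * \<delta> * ((1 + (c-\<delta>) * \<delta>) / (c-\<delta>) * ln (1 + (c-\<delta>) * u)))) \<longlonglongrightarrow> Up \<delta>"
      by (simp add: Up_def SU_def)
    have "(\<lambda>n. max 0 (1 - (\<Sum>k\<in>{1..K}. m k) * pi K n)
         * exp (- ((1 + 2 * (lam + \<delta>) * \<delta>) * (lam + \<delta>)) * ((1 + (c-\<delta>) * \<delta>) / (c-\<delta>) * ln (1 + (c-\<delta>) * u))))
       \<longlonglongrightarrow> max 0 (1 - (\<Sum>k\<in>{1..K}. m k) * 0)
         * exp (- ((1 + 2 * (lam + \<delta>) * \<delta>) * (lam + \<delta>)) * ((1 + (c-\<delta>) * \<delta>) / (c-\<delta>) * ln (1 + (c-\<delta>) * u)))"
      by (intro tendsto_intros pi_lim)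
    then have l2: "(\<lambda>n. max 0 (1 - (\<Sum>k\<in>{1..K}. m k) * pi K n)
         * exp (- ((1 + 2 * (lam + \<delta>) * \<delta>) * (lam + \<delta>)) * ((1 + (c-\<delta>) * \<delta>) / (c-\<delta>) * ln (1 + (c-\<delta>) * u))))
       \<longlonglongrightarrow> Lo \<delta>"
      by (simp add: Lo_def SU_def)
    have ev1: "eventually (\<lambda>n. dist (exp (- lam * (ln (1 + (c+\<delta>) * u * (1 - pi K n)) / (c+\<delta>))
                + 2 * \<delta> * ((1 + (c-\<delta>) * \<delta>) / (c-\<delta>) * ln (1 + (c-\<delta>) * u)))) (Up \<delta>) < \<epsilon>/2) sequentially"
      using tendsto_iff[THEN iffD1, OF l1, rule_format, of "\<epsilon>/2"] \<epsilon> by simp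
    have ev2: "eventually (\<lambda>n. dist (max 0 (1 - (\<Sum>k\<in>{1..K}. m k) * pi K n)
         * exp (- ((1 + 2 * (lam + \<delta>) * \<delta>) * (lam + \<delta>)) * ((1 + (c-\<delta>) * \<delta>) / (c-\<delta>) * ln (1 + (c-\<delta>) * u)))) (Lo \<delta>) < \<epsilon>/2) sequentially"
      using tendsto_iff[THEN iffD1, OF l2, rule_format, of "\<epsilon>/2"] \<epsilon> by simp
    show "eventually (\<lambda>n. dist (PP u n) L < \<epsilon>) sequentially"
      using eventually_conj[OF eventually_ge_at_top[of K] eventually_conj[OF ev1 ev2]]
    proof (rule eventually_mono)
      fix n assume H: "K \<le> n \<and> dist (exp (- lam * (ln (1 + (c+\<delta>) * u * (1 - pi K n)) / (c+\<delta>))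
                + 2 * \<delta> * ((1 + (c-\<delta>) * \<delta>) / (c-\<delta>) * ln (1 + (c-\<delta>) * u)))) (Up \<delta>) < \<epsilon>/2 \<and>
          dist (max 0 (1 - (\<Sum>k\<in>{1..K}. m k) * pi K n)
         * exp (- ((1 + 2 * (lam + \<delta>) * \<delta>) * (lam + \<delta>)) * ((1 + (c-\<delta>) * \<delta>) / (c-\<delta>) * ln (1 + (c-\<delta>) * u)))) (Lo \<delta>) < \<epsilon>/2"
      then have "dist (PP u n) L < 2 * (\<epsilon>/2)"
        using H dd by (intro squeeze_dist[OF K(2)[of n, OF conjunct1[OF H]] K(3)[of n, OF conjunct1[OF H]]]) blast+
      then show "dist (PP u n) L < \<epsilon>" by simp
    qed
  qed
qed

end


lemma pgf_tail:
  fixes a :: "nat \<Rightarrow> real" and x :: real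
  assumes an: "\<And>i. 0 \<le> a i" "summable a" "suminf a \<le> 1" and x: "0 \<le> x" "x \<le> 1"
  shows "summable (\<lambda>i. a i * x^i)"
    "0 \<le> (\<Sum>i. a i * x^i) - (\<Sum>i<Suc k. a i * x^i)"
    "(\<Sum>i. a i * x^i) - (\<Sum>i<Suc k. a i * x^i) \<le> x^(Suc k)"
proof -
  show sm: "summable (\<lambda>i. a i * x^i)"
    using an x by (intro summable_comparison_test'[OF an(2), of 0]) (auto simp: mult_left_le power_le_one)
  have split: "(\<Sum>i. a i * x^i) = (\<Sum>j. a (j + Suc k) * x^(j + Suc k)) + (\<Sum>i<Suc k. a i * x^i)"
    using suminf_split_initial_segment[OF sm, of "Suc k"] by simp
  have sm2: "summable (\<lambda>j. a (j + Suc k) * x^(j + Suc k))"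
    using summable_ignore_initial_segment[OF sm, of "Suc k"] by simp
  have "0 \<le> (\<Sum>j. a (j + Suc k) * x^(j + Suc k))"
    by (rule suminf_nonneg[OF sm2]) (use an x in simp)
  then show "0 \<le> (\<Sum>i. a i * x^i) - (\<Sum>i<Suc k. a i * x^i)"
    unfolding split by simp
  have sa: "summable (\<lambda>j. a (j + Suc k))" by (rule summable_ignore_initial_segment[OF an(2)])
  have "(\<Sum>j. a (j + Suc k) * x^(j + Suc k)) \<le> (\<Sum>j. a (j + Suc k) * x^(Suc k))"
    using an x sm2 sa by (intro suminf_le) (auto intro!: mult_left_mono power_decreasing summable_mult2)
  also have "\<dots> = (\<Sum>j. a (j + Suc k)) * x^(Suc k)" using sa by (simp add: suminf_mult2)
  also have "\<dots> \<le> 1 * x^(Suc k)"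
  proof -
    have "(\<Sum>j. a (j + Suc k)) = suminf a - (\<Sum>i<Suc k. a i)"
      using suminf_split_initial_segment[OF an(2), of "Suc k"] by simp
    also have "\<dots> \<le> 1"
    proof -
      have "0 \<le> (\<Sum>i<Suc k. a i)" using an by (simp add: sum_nonneg)
      then show ?thesis using an(3) by linarith
    qed
    finally show ?thesis using x by (intro mult_right_mono) auto
  qed
  finally show "(\<Sum>i. a i * x^i) - (\<Sum>i<Suc k. a i * x^i) \<le> x^(Suc k)"
    unfolding split by simp
qed

lemma pgf_conv:
  fixes a :: "nat \<Rightarrow> nat \<Rightarrow> real" and b :: "nat \<Rightarrow> real"
  assumes an: "\<And>n i. 0 \<le> a n i" "\<And>n. summable (a n)" "\<And>n. suminf (a n) \<le> 1"
    and bn: "\<And>i. 0 \<le> b i" "summable b" "suminf b \<le> 1"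
    and conv: "\<And>x. 0 \<le> x \<Longrightarrow> x < 1 \<Longrightarrow> (\<lambda>n. \<Sum>i. a n i * x^i) \<longlonglongrightarrow> (\<Sum>i. b i * x^i)"
  shows "(\<lambda>n. a n k) \<longlonglongrightarrow> b k"
proof (induction k rule: less_induct)
  case (less k)
  show ?case
    unfolding tendsto_iff
  proof (intro allI impI)
    fix \<epsilon> :: real assume \<epsilon>: "0 < \<epsilon>"
    define x where "x = min (1/2) (\<epsilon>/4)"
    have x: "0 < x" "x < 1" "x \<le> \<epsilon>/4" using \<epsilon> by (auto simp: x_def)
    have xk: "0 < x^k" using x by simp
    define Dn where "Dn n = (\<Sum>i. a n i * x^i) - (\<Sum>i<k. a n i * x^i)" for n
    define D where "D = (\<Sum>i. b i * x^i) - (\<Sum>i<k. b i * x^i)"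
    have "Dn \<longlonglongrightarrow> D" unfolding Dn_def[abs_def] D_def
      using x less by (intro tendsto_intros conv) auto
    from tendsto_iff[THEN iffD1, OF this, rule_format, of "x^k * (\<epsilon>/4)"]
    have ev: "eventually (\<lambda>n. dist (Dn n) D < x^k * (\<epsilon>/4)) sequentially"
      using xk \<epsilon> by simp
    show "eventually (\<lambda>n. dist (a n k) (b k) < \<epsilon>) sequentially"
      using ev
    proof (rule eventually_mono)
      fix n assume H: "dist (Dn n) D < x^k * (\<epsilon>/4)"
      have t1: "0 \<le> Dn n - a n k * x^k" "Dn n - a n k * x^k \<le> x^(Suc k)"
        using pgf_tail(2,3)[of "a n" x k] an x unfolding Dn_def by auto
      have t2: "0 \<le> D - b k * x^k" "D - b k * x^k \<le> x^(Suc k)"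
        using pgf_tail(2,3)[of b x k] bn x unfolding D_def by auto
      have "\<bar>a n k - b k\<bar> * x^k = \<bar>a n k * x^k - b k * x^k\<bar>" using xk by (simp add: abs_mult left_diff_distrib[symmetric])
      also have "\<dots> \<le> \<bar>Dn n - D\<bar> + x^(Suc k)" using t1 t2 by linarith
      also have "\<dots> < x^k * (\<epsilon>/4) + x^k * x" using H by (simp add: dist_real_def mult.commute)
      also have "\<dots> \<le> x^k * (\<epsilon>/2)"
      proof -
        have "x^k * x \<le> x^k * (\<epsilon>/4)" using x xk by (intro mult_left_mono) auto
        moreover have "x^k * (\<epsilon>/4) + x^k * (\<epsilon>/4) = x^k * (\<epsilon>/2)" by (simp add: field_simps)
        ultimately show ?thesis by linarith
      qed
      finally have "\<bar>a n k - b k\<bar> < \<epsilon>/2" using xk by (simp add: mult.commute)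
      then show "dist (a n k) (b k) < \<epsilon>" using \<epsilon> by (simp add: dist_real_def)
    qed
  qed
qed

lemma nb_prob_nonneg: "0 \<le> r \<Longrightarrow> 0 \<le> p \<Longrightarrow> 0 \<le> nb_prob r p k"
proof -
  assume r: "0 \<le> r" and p: "0 \<le> p"
  have "((r + real k - 1) gchoose k) = pochhammer (r + real k - 1 - real k + 1) k / fact k"
    by (rule gbinomial_pochhammer')
  also have "\<dots> = pochhammer r k / fact k" by simp
  moreover have "0 \<le> pochhammer r k" unfolding pochhammer_prod using r by (intro prod_nonneg) auto
  ultimately have "0 \<le> ((r + real k - 1) gchoose k)" by simp
  then show ?thesis unfolding nb_prob_def using p by simp
qed

lemma nb_sums:
  assumes r: "0 \<le> r" and p: "0 \<le> p" "p < 1" and x: "0 \<le> x" "x \<le> 1"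
  shows "(\<lambda>k. nb_prob r p k * x^k) sums ((1 - p) powr r * (1 - p * x) powr (- r))"
proof -
  have "p * x \<le> p" using p x by (simp add: mult_left_le)
  then have z: "\<bar>- (p * x)\<bar> < 1" using p x by (simp add: abs_mult)
  have "(\<lambda>k. ((- r) gchoose k) * (- (p * x))^k) sums (1 + - (p * x)) powr (- r)"
    by (rule gen_binomial_real[OF z])
  then have "(\<lambda>k. (1 - p) powr r * (((- r) gchoose k) * (- (p * x))^k)) sums ((1 - p) powr r * (1 - p * x) powr (- r))"
    by (intro sums_mult) simp
  moreover have "(1 - p) powr r * (((- r) gchoose k) * (- (p * x))^k) = nb_prob r p k * x^k" for k
  proof -
    have "((- r) gchoose k) = (-1)^k * ((real k - (- r) - 1) gchoose k)" by (rule gbinomial_negated_upper)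
    then have "((- r) gchoose k) * (- (p * x))^k = ((r + real k - 1) gchoose k) * (p^k * x^k)"
      by (simp add: power_minus' power_mult_distrib algebra_simps)
    then show ?thesis unfolding nb_prob_def by (simp add: mult_ac)
  qed
  ultimately show ?thesis by simp
qed


lemma nat_add_meas:
  fixes f g :: "'a \<Rightarrow> nat"
  assumes "f \<in> measurable M (count_space UNIV)" "g \<in> measurable M (count_space UNIV)"
  shows "(\<lambda>x. f x + g x) \<in> measurable M (count_space UNIV)"
  using assms by measurable

lemma nat_sum_meas:
  fixes f :: "nat \<Rightarrow> 'a \<Rightarrow> nat"
  assumes "\<And>j. j \<in> {1..i} \<Longrightarrow> f j \<in> measurable M (count_space UNIV)"
  shows "(\<lambda>\<omega>. \<Sum>j\<in>{1..i}. f j \<omega>) \<in> measurable M (count_space UNIV)"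
  using assms
proof (induction i)
  case 0 then show ?case by simp
next
  case (Suc i)
  have m1: "(\<lambda>\<omega>. \<Sum>j\<in>{1..i}. f j \<omega>) \<in> measurable M (count_space UNIV)" using Suc by auto
  have m2: "f (Suc i) \<in> measurable M (count_space UNIV)" using Suc by auto
  have "(\<lambda>\<omega>. (\<Sum>j\<in>{1..i}. f j \<omega>) + f (Suc i) \<omega>) \<in> measurable M (count_space UNIV)"
    using m1 m2 by measurable
  then show ?case by (simp add: add.commute)
qed

context prob_space begin

lemma decomp_sums:
  fixes Z :: "'a \<Rightarrow> nat" and W :: "nat \<Rightarrow> 'a \<Rightarrow> real"
  assumes Z: "Z \<in> measurable M (count_space UNIV)" and W: "\<And>m. W m \<in> borel_measurable M"
    and Wb: "\<And>m \<omega>. \<omega> \<in> space M \<Longrightarrow> \<bar>W m \<omega>\<bar> \<le> 1"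
  shows "(\<lambda>m. \<integral>\<omega>. (if Z \<omega> = m then W m \<omega> else 0) \<partial>M) sums (\<integral>\<omega>. W (Z \<omega>) \<omega> \<partial>M)"
proof -
  define s where "s N \<omega> = (\<Sum>m<N. (if Z \<omega> = m then W m \<omega> else 0))" for N \<omega>
  have s_eq: "s N \<omega> = (if Z \<omega> < N then W (Z \<omega>) \<omega> else 0)" for N \<omega>
    unfolding s_def by (subst sum.delta') auto
  have meas_if: "(\<lambda>\<omega>. if Z \<omega> = m then W m \<omega> else 0) \<in> borel_measurable M" for m
    using Z W by measurable
  have int_if: "integrable M (\<lambda>\<omega>. if Z \<omega> = m then W m \<omega> else 0)" for m
    by (rule integrable_const_bound[where B=1]) (use Wb meas_if in auto)
  have fW: "(\<lambda>\<omega>. W (Z \<omega>) \<omega>) \<in> borel_measurable M"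
    by (rule measurable_compose_countable[where f="\<lambda>m \<omega>. W m \<omega>" and g=Z]) (use W Z in auto)
  have "(\<lambda>N. integral\<^sup>L M (s N)) \<longlonglongrightarrow> (\<integral>\<omega>. W (Z \<omega>) \<omega> \<partial>M)"
  proof (rule integral_dominated_convergence[where w="\<lambda>_. 1"])
    show "(\<lambda>\<omega>. W (Z \<omega>) \<omega>) \<in> borel_measurable M" by (rule fW)
    show "s N \<in> borel_measurable M" for N unfolding s_def using meas_if by measurable
    show "integrable M (\<lambda>_. 1::real)" by simp
    show "AE \<omega> in M. (\<lambda>N. s N \<omega>) \<longlonglongrightarrow> W (Z \<omega>) \<omega>"
    proof (intro AE_I2)
      fix \<omega>
      have "eventually (\<lambda>N. s N \<omega> = W (Z \<omega>) \<omega>) sequentially"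
        using eventually_gt_at_top[of "Z \<omega>"] by (rule eventually_mono) (simp add: s_eq)
      then show "(\<lambda>N. s N \<omega>) \<longlonglongrightarrow> W (Z \<omega>) \<omega>" by (rule tendsto_eventually)
    qed
    show "AE \<omega> in M. norm (s N \<omega>) \<le> 1" for N
      using Wb by (intro AE_I2) (auto simp: s_eq)
  qed
  moreover have "integral\<^sup>L M (s N) = (\<Sum>m<N. \<integral>\<omega>. (if Z \<omega> = m then W m \<omega> else 0) \<partial>M)" for N
    unfolding s_def using int_if by (subst Bochner_Integration.integral_sum) auto
  ultimately show ?thesis unfolding sums_def by simp
qed

lemma gf_sums:
  fixes Z :: "'a \<Rightarrow> nat" and x :: real
  assumes Z: "Z \<in> measurable M (count_space UNIV)" and x: "0 \<le> x" "x \<le> 1"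
  shows "(\<lambda>m. prob {\<omega>\<in>space M. Z \<omega> = m} * x^m) sums (\<integral>\<omega>. x ^ Z \<omega> \<partial>M)"
proof -
  have "(\<lambda>m. \<integral>\<omega>. (if Z \<omega> = m then x^m else 0) \<partial>M) sums (\<integral>\<omega>. x ^ Z \<omega> \<partial>M)"
    using decomp_sums[OF Z, of "\<lambda>m \<omega>. x^m"] x by (simp add: power_le_one)
  moreover have "(\<integral>\<omega>. (if Z \<omega> = m then x^m else 0) \<partial>M) = prob {\<omega>\<in>space M. Z \<omega> = m} * x^m" for m
  proof -
    have "(\<integral>\<omega>. (if Z \<omega> = m then x^m else 0) \<partial>M) = (\<integral>\<omega>. indicator {\<omega>\<in>space M. Z \<omega> = m} \<omega> * x^m \<partial>M)"
      by (rule Bochner_Integration.integral_cong) (auto simp: indicator_def)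
    also have "\<dots> = prob {\<omega>\<in>space M. Z \<omega> = m} * x^m"
      by (simp add: Int_absorb2)
    finally show ?thesis .
  qed
  ultimately show ?thesis by simp
qed

end


locale bps = prob_space M for M :: "'a measure" +
  fixes \<xi> :: "nat \<Rightarrow> nat \<Rightarrow> 'a \<Rightarrow> nat" and \<epsilon> :: "nat \<Rightarrow> 'a \<Rightarrow> nat"
  assumes meas_xi: "\<And>n j. n \<ge> 1 \<Longrightarrow> j \<ge> 1 \<Longrightarrow> \<xi> n j \<in> measurable M (count_space UNIV)"
    and meas_eps: "\<And>n. n \<ge> 1 \<Longrightarrow> \<epsilon> n \<in> measurable M (count_space UNIV)"
    and indep: "indep_vars (\<lambda>_. count_space UNIV)
                  (\<lambda>i. case i of Inl (n, j) \<Rightarrow> \<xi> n j | Inr n \<Rightarrow> \<epsilon> n)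
                  ({Inl (n, j) | n j. n \<ge> 1 \<and> j \<ge> 1} \<union> {Inr n | n. n \<ge> 1})"
    and ident: "\<And>n j. n \<ge> 1 \<Longrightarrow> j \<ge> 1 \<Longrightarrow>
                  distr M (count_space UNIV) (\<xi> n j) = distr M (count_space UNIV) (\<xi> n 1)"
begin

definition Yv :: "(nat \<times> nat) + nat \<Rightarrow> 'a \<Rightarrow> nat" where
  "Yv = (\<lambda>i. case i of Inl (n, j) \<Rightarrow> \<xi> n j | Inr n \<Rightarrow> \<epsilon> n)"

definition II :: "((nat \<times> nat) + nat) set" where
  "II = {Inl (n, j) | n j. n \<ge> 1 \<and> j \<ge> 1} \<union> {Inr n | n. n \<ge> 1}"

lemma indep': "indep_vars (\<lambda>_. count_space UNIV) Yv II"
  using indep unfolding Yv_def II_def .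

abbreviation X where "X n \<equiv> bp_X \<xi> \<epsilon> n"

definition EE :: "nat \<Rightarrow> ((nat \<times> nat) + nat) set" where
  "EE n = {Inl (k, j) | k j. 1 \<le> k \<and> k \<le> n \<and> 1 \<le> j} \<union> {Inr k | k. 1 \<le> k \<and> k \<le> n}"

definition BB :: "nat \<Rightarrow> nat \<Rightarrow> ((nat \<times> nat) + nat) set" where
  "BB n m = {Inl (Suc n, j) | j. 1 \<le> j \<and> j \<le> m} \<union> {Inr (Suc n)}"

definition Xf :: "nat \<Rightarrow> ((nat \<times> nat) + nat \<Rightarrow> nat) \<Rightarrow> nat" where
  "Xf n f = bp_X (\<lambda>k j f. f (Inl (k, j))) (\<lambda>k f. f (Inr k)) n f"

lemma X_meas: "X n \<in> measurable M (count_space UNIV)"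
proof (induction n)
  case 0 then show ?case by simp
next
  case (Suc n)
  have "(\<lambda>\<omega>. (\<lambda>i \<omega>. (\<Sum>j\<in>{1..i}. \<xi> (Suc n) j \<omega>) + \<epsilon> (Suc n) \<omega>) (X n \<omega>) \<omega>) \<in> measurable M (count_space UNIV)"
  proof (rule measurable_compose_countable[OF _ Suc])
    fix i
    have "(\<lambda>\<omega>. \<Sum>j\<in>{1..i}. \<xi> (Suc n) j \<omega>) \<in> measurable M (count_space UNIV)"
      by (rule nat_sum_meas) (auto intro: meas_xi)
    moreover have "\<epsilon> (Suc n) \<in> measurable M (count_space UNIV)" by (rule meas_eps) simp
    ultimately show "(\<lambda>\<omega>. (\<Sum>j\<in>{1..i}. \<xi> (Suc n) j \<omega>) + \<epsilon> (Suc n) \<omega>) \<in> measurable M (count_space UNIV)"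
      by measurable
  qed
  then show ?case by simp
qed

lemma Xf_meas: "k \<le> n \<Longrightarrow> Xf k \<in> measurable (PiM (EE n) (\<lambda>_. count_space UNIV)) (count_space UNIV)"
proof (induction k)
  case 0 then show ?case by (simp add: Xf_def)
next
  case (Suc k)
  let ?P = "PiM (EE n) (\<lambda>_. count_space UNIV) :: ((nat \<times> nat) + nat \<Rightarrow> nat) measure"
  have "(\<lambda>f. (\<lambda>i f. (\<Sum>j\<in>{1..i}. f (Inl (Suc k, j))) + f (Inr (Suc k))) (Xf k f) f) \<in> measurable ?P (count_space UNIV)"
  proof (rule measurable_compose_countable[OF _ Suc.IH])
    fix i
    have "(\<lambda>f. \<Sum>j\<in>{1..i}. f (Inl (Suc k, j))) \<in> measurable ?P (count_space UNIV)"
      using Suc.prems by (intro nat_sum_meas measurable_component_singleton) (auto simp: EE_def)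
    moreover have "(\<lambda>f. f (Inr (Suc k))) \<in> measurable ?P (count_space UNIV)"
      using Suc.prems by (intro measurable_component_singleton) (auto simp: EE_def)
    ultimately show "(\<lambda>f. (\<Sum>j\<in>{1..i}. f (Inl (Suc k, j))) + f (Inr (Suc k))) \<in> measurable ?P (count_space UNIV)"
      by (rule nat_add_meas)
  qed (use Suc.prems in simp)
  then show ?case by (simp add: Xf_def)
qed

lemma Xf_restrict: "k \<le> n \<Longrightarrow> Xf k (restrict (\<lambda>i. Yv i \<omega>) (EE n)) = X k \<omega>"
proof (induction k)
  case 0 then show ?case by (simp add: Xf_def)
next
  case (Suc k)
  have IH: "Xf k (restrict (\<lambda>i. Yv i \<omega>) (EE n)) = X k \<omega>" using Suc.IH Suc.prems by (simp add: restrict_def)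
  have "Xf (Suc k) (restrict (\<lambda>i. Yv i \<omega>) (EE n))
      = (\<Sum>j\<in>{1..X k \<omega>}. restrict (\<lambda>i. Yv i \<omega>) (EE n) (Inl (Suc k, j))) + restrict (\<lambda>i. Yv i \<omega>) (EE n) (Inr (Suc k))"
    using IH by (simp add: Xf_def)
  also have "\<dots> = (\<Sum>j\<in>{1..X k \<omega>}. \<xi> (Suc k) j \<omega>) + \<epsilon> (Suc k) \<omega>"
    using Suc.prems by (intro arg_cong2[where f="(+)"] sum.cong) (auto simp: EE_def Yv_def)
  finally show ?case by (simp add: restrict_def)
qed

lemma indep_EB: "indep_var (PiM (EE n) (\<lambda>_. count_space UNIV)) (\<lambda>\<omega>. restrict (\<lambda>i. Yv i \<omega>) (EE n))
    (PiM (BB n m) (\<lambda>_. count_space UNIV)) (\<lambda>\<omega>. restrict (\<lambda>i. Yv i \<omega>) (BB n m))"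
proof -
  define K where "K b = (if b then EE n else BB n m)" for b
  have A: "indep_vars (\<lambda>j. PiM (K j) (\<lambda>_. count_space UNIV)) (\<lambda>j \<omega>. restrict (\<lambda>i. Yv i \<omega>) (K j)) UNIV"
    by (rule indep_vars_restrict[OF indep'])
      (auto simp: K_def EE_def BB_def II_def disjoint_family_on_def)
  have e1: "(\<lambda>j. PiM (K j) (\<lambda>_. count_space UNIV)) = case_bool (PiM (EE n) (\<lambda>_. count_space UNIV)) (PiM (BB n m) (\<lambda>_. count_space UNIV))"
    by (rule ext) (simp add: K_def split: bool.split)
  have e2: "(\<lambda>j \<omega>. restrict (\<lambda>i. Yv i \<omega>) (K j)) = case_bool (\<lambda>\<omega>. restrict (\<lambda>i. Yv i \<omega>) (EE n)) (\<lambda>\<omega>. restrict (\<lambda>i. Yv i \<omega>) (BB n m))"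
    by (rule ext) (simp add: K_def split: bool.split)
  show ?thesis unfolding indep_var_def using A[unfolded e1 e2] .
qed

end


context prob_space begin

lemma gf_range:
  fixes Z :: "'a \<Rightarrow> nat" and x :: real
  assumes Z: "Z \<in> measurable M (count_space UNIV)" and x: "0 \<le> x" "x \<le> 1"
  shows "integrable M (\<lambda>\<omega>. x ^ Z \<omega>)" "0 \<le> (\<integral>\<omega>. x ^ Z \<omega> \<partial>M)" "(\<integral>\<omega>. x ^ Z \<omega> \<partial>M) \<le> 1"
proof -
  have m: "(\<lambda>\<omega>. x ^ Z \<omega>) \<in> borel_measurable M" using Z by measurable
  show i: "integrable M (\<lambda>\<omega>. x ^ Z \<omega>)"
    by (rule integrable_const_bound[where B=1]) (use m x in \<open>auto simp: power_le_one\<close>)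
  show "0 \<le> (\<integral>\<omega>. x ^ Z \<omega> \<partial>M)" using x by (intro integral_nonneg_AE) auto
  have "(\<integral>\<omega>. x ^ Z \<omega> \<partial>M) \<le> (\<integral>\<omega>. 1 \<partial>M)"
    using i x by (intro integral_mono) (auto simp: power_le_one)
  then show "(\<integral>\<omega>. x ^ Z \<omega> \<partial>M) \<le> 1" by (simp add: prob_space)
qed

end

context bps begin

definition GG :: "nat \<Rightarrow> real \<Rightarrow> real" where "GG k x = (\<integral>\<omega>. x ^ \<xi> k 1 \<omega> \<partial>M)"
definition HH :: "nat \<Rightarrow> real \<Rightarrow> real" where "HH k x = (\<integral>\<omega>. x ^ \<epsilon> k \<omega> \<partial>M)"
definition FF :: "nat \<Rightarrow> real \<Rightarrow> real" where "FF n x = (\<integral>\<omega>. x ^ X n \<omega> \<partial>M)"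
definition WW :: "real \<Rightarrow> nat \<Rightarrow> nat \<Rightarrow> 'a \<Rightarrow> real" where
  "WW x n m \<omega> = x ^ ((\<Sum>j\<in>{1..m}. \<xi> (Suc n) j \<omega>) + \<epsilon> (Suc n) \<omega>)"

lemma BB_eq: "BB n m = insert (Inr (Suc n)) ((\<lambda>j. Inl (Suc n, j)) ` {1..m})"
  unfolding BB_def by auto

lemma prodB: "(\<Prod>i\<in>BB n m. F i) = (\<Prod>j\<in>{1..m}. F (Inl (Suc n, j))) * F (Inr (Suc n))"
  for F :: "_ \<Rightarrow> real"
proof -
  have "(\<Prod>i\<in>BB n m. F i) = F (Inr (Suc n)) * (\<Prod>i\<in>(\<lambda>j. Inl (Suc n, j)) ` {1..m}. F i)"
    unfolding BB_eq by (subst prod.insert) auto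
  also have "(\<Prod>i\<in>(\<lambda>j. Inl (Suc n, j)) ` {1..m}. F i) = (\<Prod>j\<in>{1..m}. F (Inl (Suc n, j)))"
    by (subst prod.reindex) (auto simp: inj_on_def)
  finally show ?thesis by simp
qed

lemma Yv_meas: "i \<in> II \<Longrightarrow> Yv i \<in> measurable M (count_space UNIV)"
  unfolding II_def Yv_def using meas_xi meas_eps by auto

lemma xi_int_eq:
  assumes "k \<ge> 1" "j \<ge> 1"
  shows "(\<integral>\<omega>. x ^ \<xi> k j \<omega> \<partial>M) = GG k x"
proof -
  have "(\<integral>\<omega>. x ^ \<xi> k j \<omega> \<partial>M) = integral\<^sup>L (distr M (count_space UNIV) (\<xi> k j)) (\<lambda>z. x ^ z)"
    using meas_xi[OF assms] by (subst integral_distr) auto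
  also have "\<dots> = integral\<^sup>L (distr M (count_space UNIV) (\<xi> k 1)) (\<lambda>z. x ^ z)"
    using ident[OF assms] by simp
  also have "\<dots> = GG k x"
    using meas_xi[OF assms(1), of 1] unfolding GG_def by (subst integral_distr) auto
  finally show ?thesis .
qed

lemma EW:
  assumes x: "0 \<le> x" "x \<le> 1"
  shows "(\<integral>\<omega>. WW x n m \<omega> \<partial>M) = (GG (Suc n) x)^m * HH (Suc n) x"
proof -
  have BI: "BB n m \<subseteq> II" unfolding BB_def II_def by auto
  have W_eq: "WW x n m \<omega> = (\<Prod>i\<in>BB n m. x ^ Yv i \<omega>)" for \<omega>
    unfolding WW_def prodB by (simp add: power_add power_sum Yv_def)
  have ind: "indep_vars (\<lambda>_. borel) (\<lambda>i \<omega>. x ^ Yv i \<omega>) (BB n m)"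
    by (rule indep_vars_compose2[OF indep_vars_subset[OF indep' BI], where Y="\<lambda>i k. x ^ k"]) simp
  have int: "integrable M (\<lambda>\<omega>. x ^ Yv i \<omega>)" if "i \<in> BB n m" for i
    using gf_range(1)[OF Yv_meas x] that BI by auto
  have "(\<integral>\<omega>. WW x n m \<omega> \<partial>M) = (\<integral>\<omega>. (\<Prod>i\<in>BB n m. x ^ Yv i \<omega>) \<partial>M)"
    by (simp add: W_eq)
  also have "\<dots> = (\<Prod>i\<in>BB n m. \<integral>\<omega>. x ^ Yv i \<omega> \<partial>M)"
    by (rule indep_vars_lebesgue_integral[OF _ ind int]) (simp add: BB_def)
  also have "\<dots> = (\<Prod>j\<in>{1..m}. \<integral>\<omega>. x ^ \<xi> (Suc n) j \<omega> \<partial>M) * HH (Suc n) x"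
    by (simp add: prodB Yv_def HH_def)
  also have "\<dots> = (\<Prod>j\<in>{1..m}. GG (Suc n) x) * HH (Suc n) x"
    by (intro arg_cong2[where f="(*)"] prod.cong refl xi_int_eq) auto
  also have "\<dots> = (GG (Suc n) x)^m * HH (Suc n) x" by simp
  finally show ?thesis .
qed

lemma E_ind:
  assumes x: "0 \<le> x" "x \<le> 1"
  shows "(\<integral>\<omega>. (if X n \<omega> = m then WW x n m \<omega> else 0) \<partial>M)
        = prob {\<omega>\<in>space M. X n \<omega> = m} * (\<integral>\<omega>. WW x n m \<omega> \<partial>M)"
proof -
  let ?PE = "PiM (EE n) (\<lambda>_. count_space UNIV) :: ((nat \<times> nat) + nat \<Rightarrow> nat) measure"
  let ?PB = "PiM (BB n m) (\<lambda>_. count_space UNIV) :: ((nat \<times> nat) + nat \<Rightarrow> nat) measure"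
  define \<Phi>1 where "\<Phi>1 f = (if Xf n f = m then 1 else 0 :: real)" for f
  define \<Phi>2 where "\<Phi>2 f = x ^ ((\<Sum>j\<in>{1..m}. f (Inl (Suc n, j))) + f (Inr (Suc n)))" for f
  have XM: "Xf n \<in> measurable ?PE (count_space UNIV)" by (rule Xf_meas) simp
  have m1: "\<Phi>1 \<in> borel_measurable ?PE" unfolding \<Phi>1_def using XM by measurable
  have "(\<lambda>f. (\<Sum>j\<in>{1..m}. f (Inl (Suc n, j))) + f (Inr (Suc n))) \<in> measurable ?PB (count_space UNIV)"
    by (intro nat_add_meas nat_sum_meas measurable_component_singleton) (auto simp: BB_def)
  then have m2: "\<Phi>2 \<in> borel_measurable ?PB" unfolding \<Phi>2_def
    by (rule measurable_compose[where f="\<lambda>f. (\<Sum>j\<in>{1..m}. f (Inl (Suc n, j))) + f (Inr (Suc n))" and g="\<lambda>k. x ^ k"]) simp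
  have ind: "indep_var borel (\<Phi>1 \<circ> (\<lambda>\<omega>. restrict (\<lambda>i. Yv i \<omega>) (EE n))) borel (\<Phi>2 \<circ> (\<lambda>\<omega>. restrict (\<lambda>i. Yv i \<omega>) (BB n m)))"
    by (rule indep_var_compose[OF indep_EB m1 m2])
  have e1: "(\<Phi>1 \<circ> (\<lambda>\<omega>. restrict (\<lambda>i. Yv i \<omega>) (EE n))) \<omega> = (if X n \<omega> = m then 1 else 0)" for \<omega>
    unfolding \<Phi>1_def comp_def using Xf_restrict[of n n \<omega>] by simp
  have e2: "(\<Phi>2 \<circ> (\<lambda>\<omega>. restrict (\<lambda>i. Yv i \<omega>) (BB n m))) \<omega> = WW x n m \<omega>" for \<omega>
  proof -
    have "(\<Sum>j\<in>{1..m}. restrict (\<lambda>i. Yv i \<omega>) (BB n m) (Inl (Suc n, j))) = (\<Sum>j\<in>{1..m}. \<xi> (Suc n) j \<omega>)"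
      by (intro sum.cong) (auto simp: BB_def Yv_def)
    then show ?thesis unfolding \<Phi>2_def WW_def comp_def by (simp add: BB_def Yv_def)
  qed
  have f1: "(\<Phi>1 \<circ> (\<lambda>\<omega>. restrict (\<lambda>i. Yv i \<omega>) (EE n))) = (\<lambda>\<omega>. if X n \<omega> = m then 1 else 0)"
    using e1 by auto
  have f2: "(\<Phi>2 \<circ> (\<lambda>\<omega>. restrict (\<lambda>i. Yv i \<omega>) (BB n m))) = WW x n m"
    using e2 by auto
  have ind': "indep_var borel (\<lambda>\<omega>. if X n \<omega> = m then 1 else 0 :: real) borel (WW x n m)"
    using ind unfolding f1 f2 .
  have mX: "X n \<in> measurable M (count_space UNIV)" by (rule X_meas)
  have int1: "integrable M (\<lambda>\<omega>. if X n \<omega> = m then 1 else 0 :: real)"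
    by (rule integrable_const_bound[where B=1]) (use mX in auto)
  have mW: "WW x n m \<in> borel_measurable M"
  proof -
    have "(\<lambda>\<omega>. (\<Sum>j\<in>{1..m}. \<xi> (Suc n) j \<omega>) + \<epsilon> (Suc n) \<omega>) \<in> measurable M (count_space UNIV)"
      by (intro nat_add_meas nat_sum_meas meas_xi meas_eps) auto
    then show ?thesis unfolding WW_def[abs_def]
      by (rule measurable_compose[where g="\<lambda>k. x ^ k"]) simp
  qed
  have int2: "integrable M (WW x n m)"
    by (rule integrable_const_bound[where B=1]) (use mW x in \<open>auto simp: WW_def power_le_one\<close>)
  have "(\<integral>\<omega>. (if X n \<omega> = m then WW x n m \<omega> else 0) \<partial>M) = (\<integral>\<omega>. (if X n \<omega> = m then 1 else 0) * WW x n m \<omega> \<partial>M)"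
    by (rule Bochner_Integration.integral_cong) auto
  also have "\<dots> = (\<integral>\<omega>. (if X n \<omega> = m then 1 else 0) \<partial>M) * (\<integral>\<omega>. WW x n m \<omega> \<partial>M)"
    by (rule indep_var_lebesgue_integral[OF ind' int1 int2])
  also have "(\<integral>\<omega>. (if X n \<omega> = m then 1 else 0) \<partial>M) = prob {\<omega>\<in>space M. X n \<omega> = m}"
  proof -
    have "(\<integral>\<omega>. (if X n \<omega> = m then 1 else 0) \<partial>M) = (\<integral>\<omega>. indicator {\<omega>\<in>space M. X n \<omega> = m} \<omega> \<partial>M)"
      by (rule Bochner_Integration.integral_cong) (auto simp: indicator_def)
    also have "\<dots> = prob {\<omega>\<in>space M. X n \<omega> = m}" by (simp add: Int_absorb2)
    finally show ?thesis .
  qed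
  finally show ?thesis .
qed

lemma FF_rec:
  assumes x: "0 \<le> x" "x \<le> 1"
  shows "FF (Suc n) x = FF n (GG (Suc n) x) * HH (Suc n) x"
proof -
  have mW: "WW x n m \<in> borel_measurable M" for m
  proof -
    have "(\<lambda>\<omega>. (\<Sum>j\<in>{1..m}. \<xi> (Suc n) j \<omega>) + \<epsilon> (Suc n) \<omega>) \<in> measurable M (count_space UNIV)"
      by (intro nat_add_meas nat_sum_meas meas_xi meas_eps) auto
    then show ?thesis unfolding WW_def[abs_def]
      by (rule measurable_compose[where g="\<lambda>k. x ^ k"]) simp
  qed
  have "(\<lambda>m. \<integral>\<omega>. (if X n \<omega> = m then WW x n m \<omega> else 0) \<partial>M) sums (\<integral>\<omega>. WW x n (X n \<omega>) \<omega> \<partial>M)"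
    by (rule decomp_sums[OF X_meas mW]) (use x in \<open>auto simp: WW_def power_le_one\<close>)
  moreover have "(\<integral>\<omega>. WW x n (X n \<omega>) \<omega> \<partial>M) = FF (Suc n) x" by (simp add: FF_def WW_def)
  ultimately have s1: "(\<lambda>m. prob {\<omega>\<in>space M. X n \<omega> = m} * ((GG (Suc n) x)^m * HH (Suc n) x)) sums FF (Suc n) x"
    by (simp only: E_ind[OF x] EW[OF x])
  have y: "0 \<le> GG (Suc n) x" "GG (Suc n) x \<le> 1"
    using gf_range(2,3)[OF meas_xi x, of "Suc n" 1] by (auto simp: GG_def)
  have "(\<lambda>m. prob {\<omega>\<in>space M. X n \<omega> = m} * (GG (Suc n) x)^m * HH (Suc n) x) sums (FF n (GG (Suc n) x) * HH (Suc n) x)"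
    using gf_sums[OF X_meas y] unfolding FF_def by (rule sums_mult2)
  then have s2: "(\<lambda>m. prob {\<omega>\<in>space M. X n \<omega> = m} * ((GG (Suc n) x)^m * HH (Suc n) x)) sums (FF n (GG (Suc n) x) * HH (Suc n) x)"
    by (simp add: mult.assoc)
  show ?thesis using sums_unique2[OF s1 s2] .
qed

end


lemma ff1[simp]: "falling_fact 1 z = real z" by (simp add: falling_fact_def)
lemma ff1'[simp]: "falling_fact (Suc 0) z = real z" by (simp add: falling_fact_def)
lemma ff2[simp]: "falling_fact 2 z = real z * (real z - 1)"
  by (simp add: falling_fact_def numeral_2_eq_2 lessThan_Suc)
lemma ff3[simp]: "falling_fact 3 z = real z * (real z - 1) * (real z - 2)"
  by (simp add: falling_fact_def numeral_3_eq_3 numeral_2_eq_2 lessThan_Suc mult_ac)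

lemma ff2_nn: "0 \<le> real z * (real z - 1)" by (cases z) auto
lemma ff3_nn: "0 \<le> real z * (real z - 1) * (real z - 2)"
  by (cases "z \<le> 2") (auto simp: le_Suc_eq numeral_2_eq_2)

context prob_space begin

lemma taylor_int:
  fixes Z :: "'a \<Rightarrow> nat" and u :: real
  assumes Z: "Z \<in> measurable M (count_space UNIV)"
    and i1: "integrable M (\<lambda>\<omega>. real (Z \<omega>))"
    and i2: "integrable M (\<lambda>\<omega>. real (Z \<omega>) * (real (Z \<omega>) - 1))"
    and u: "0 \<le> u" "u \<le> 1"
  shows "0 \<le> 1 - (\<integral>\<omega>. (1-u) ^ Z \<omega> \<partial>M)"
    "1 - (\<integral>\<omega>. (1-u) ^ Z \<omega> \<partial>M) \<le> u * (\<integral>\<omega>. real (Z \<omega>) \<partial>M)"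
    "u * (\<integral>\<omega>. real (Z \<omega>) \<partial>M) - u^2 / 2 * (\<integral>\<omega>. real (Z \<omega>) * (real (Z \<omega>) - 1) \<partial>M)
       \<le> 1 - (\<integral>\<omega>. (1-u) ^ Z \<omega> \<partial>M)"
proof -
  have x: "0 \<le> 1 - u" "1 - u \<le> 1" using u by auto
  have iF: "integrable M (\<lambda>\<omega>. (1-u) ^ Z \<omega>)" by (rule gf_range(1)[OF Z x])
  have eq1: "1 - (\<integral>\<omega>. (1-u) ^ Z \<omega> \<partial>M) = (\<integral>\<omega>. 1 - (1-u) ^ Z \<omega> \<partial>M)"
    using iF by (subst Bochner_Integration.integral_diff) (auto simp: prob_space)
  have iD: "integrable M (\<lambda>\<omega>. 1 - (1-u) ^ Z \<omega>)" using iF by simp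
  show "0 \<le> 1 - (\<integral>\<omega>. (1-u) ^ Z \<omega> \<partial>M)" using gf_range(3)[OF Z x] by simp
  have "(\<integral>\<omega>. 1 - (1-u) ^ Z \<omega> \<partial>M) \<le> (\<integral>\<omega>. u * real (Z \<omega>) \<partial>M)"
    using iD i1 binom_ineq_basic[OF u] by (intro integral_mono) (auto simp: mult.commute)
  then show "1 - (\<integral>\<omega>. (1-u) ^ Z \<omega> \<partial>M) \<le> u * (\<integral>\<omega>. real (Z \<omega>) \<partial>M)"
    unfolding eq1 by simp
  have "(\<integral>\<omega>. u * real (Z \<omega>) - u^2 / 2 * (real (Z \<omega>) * (real (Z \<omega>) - 1)) \<partial>M) \<le> (\<integral>\<omega>. 1 - (1-u) ^ Z \<omega> \<partial>M)"
  proof (intro integral_mono)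
    show "integrable M (\<lambda>\<omega>. u * real (Z \<omega>) - u^2 / 2 * (real (Z \<omega>) * (real (Z \<omega>) - 1)))"
      using i1 i2 by auto
    show "integrable M (\<lambda>\<omega>. 1 - (1-u) ^ Z \<omega>)" by (rule iD)
    fix \<omega>
    have "real (Z \<omega>) * u - real (Z \<omega>) * (real (Z \<omega>) - 1) / 2 * u^2 \<le> 1 - (1-u)^(Z \<omega>)"
      by (rule binom_ineq_lower[OF u])
    moreover have "real (Z \<omega>) * u - real (Z \<omega>) * (real (Z \<omega>) - 1) / 2 * u^2
       = u * real (Z \<omega>) - u^2 / 2 * (real (Z \<omega>) * (real (Z \<omega>) - 1))" by (simp add: field_simps)
    ultimately show "u * real (Z \<omega>) - u^2 / 2 * (real (Z \<omega>) * (real (Z \<omega>) - 1)) \<le> 1 - (1-u) ^ Z \<omega>" by metis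
  qed
  moreover have "(\<integral>\<omega>. u * real (Z \<omega>) - u^2 / 2 * (real (Z \<omega>) * (real (Z \<omega>) - 1)) \<partial>M)
     = u * (\<integral>\<omega>. real (Z \<omega>) \<partial>M) - u^2 / 2 * (\<integral>\<omega>. real (Z \<omega>) * (real (Z \<omega>) - 1) \<partial>M)"
    using i1 i2 by (subst Bochner_Integration.integral_diff) auto
  ultimately show "u * (\<integral>\<omega>. real (Z \<omega>) \<partial>M) - u^2 / 2 * (\<integral>\<omega>. real (Z \<omega>) * (real (Z \<omega>) - 1) \<partial>M)
       \<le> 1 - (\<integral>\<omega>. (1-u) ^ Z \<omega> \<partial>M)" unfolding eq1 by simp
qed

lemma taylor_int3:
  fixes Z :: "'a \<Rightarrow> nat" and u :: real
  assumes Z: "Z \<in> measurable M (count_space UNIV)"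
    and i1: "integrable M (\<lambda>\<omega>. real (Z \<omega>))"
    and i2: "integrable M (\<lambda>\<omega>. real (Z \<omega>) * (real (Z \<omega>) - 1))"
    and i3: "integrable M (\<lambda>\<omega>. real (Z \<omega>) * (real (Z \<omega>) - 1) * (real (Z \<omega>) - 2))"
    and u: "0 \<le> u" "u \<le> 1"
  shows "1 - (\<integral>\<omega>. (1-u) ^ Z \<omega> \<partial>M) \<le> u * (\<integral>\<omega>. real (Z \<omega>) \<partial>M)
       - u^2 / 2 * (\<integral>\<omega>. real (Z \<omega>) * (real (Z \<omega>) - 1) \<partial>M)
       + u^3 / 6 * (\<integral>\<omega>. real (Z \<omega>) * (real (Z \<omega>) - 1) * (real (Z \<omega>) - 2) \<partial>M)"
proof -
  have x: "0 \<le> 1 - u" "1 - u \<le> 1" using u by auto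
  have iF: "integrable M (\<lambda>\<omega>. (1-u) ^ Z \<omega>)" by (rule gf_range(1)[OF Z x])
  have eq1: "1 - (\<integral>\<omega>. (1-u) ^ Z \<omega> \<partial>M) = (\<integral>\<omega>. 1 - (1-u) ^ Z \<omega> \<partial>M)"
    using iF by (subst Bochner_Integration.integral_diff) (auto simp: prob_space)
  have iD: "integrable M (\<lambda>\<omega>. 1 - (1-u) ^ Z \<omega>)" using iF by simp
  have "(\<integral>\<omega>. 1 - (1-u) ^ Z \<omega> \<partial>M) \<le> (\<integral>\<omega>. u * real (Z \<omega>) - u^2 / 2 * (real (Z \<omega>) * (real (Z \<omega>) - 1))
        + u^3 / 6 * (real (Z \<omega>) * (real (Z \<omega>) - 1) * (real (Z \<omega>) - 2)) \<partial>M)"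
  proof (intro integral_mono)
    show "integrable M (\<lambda>\<omega>. u * real (Z \<omega>) - u^2 / 2 * (real (Z \<omega>) * (real (Z \<omega>) - 1))
        + u^3 / 6 * (real (Z \<omega>) * (real (Z \<omega>) - 1) * (real (Z \<omega>) - 2)))"
      using i1 i2 i3 by auto
    show "integrable M (\<lambda>\<omega>. 1 - (1-u) ^ Z \<omega>)" by (rule iD)
    fix \<omega>
    have "1 - (1-u)^(Z \<omega>) \<le> real (Z \<omega>) * u - real (Z \<omega>) * (real (Z \<omega>) - 1) / 2 * u^2
            + real (Z \<omega>) * (real (Z \<omega>) - 1) * (real (Z \<omega>) - 2) / 6 * u^3"
      by (rule binom_ineq_upper[OF u])
    moreover have "real (Z \<omega>) * u - real (Z \<omega>) * (real (Z \<omega>) - 1) / 2 * u^2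
            + real (Z \<omega>) * (real (Z \<omega>) - 1) * (real (Z \<omega>) - 2) / 6 * u^3
       = u * real (Z \<omega>) - u^2 / 2 * (real (Z \<omega>) * (real (Z \<omega>) - 1))
        + u^3 / 6 * (real (Z \<omega>) * (real (Z \<omega>) - 1) * (real (Z \<omega>) - 2))" by (simp add: field_simps)
    ultimately show "1 - (1-u) ^ Z \<omega> \<le> u * real (Z \<omega>) - u^2 / 2 * (real (Z \<omega>) * (real (Z \<omega>) - 1))
        + u^3 / 6 * (real (Z \<omega>) * (real (Z \<omega>) - 1) * (real (Z \<omega>) - 2))" by metis
  qed
  moreover have "(\<integral>\<omega>. u * real (Z \<omega>) - u^2 / 2 * (real (Z \<omega>) * (real (Z \<omega>) - 1))
        + u^3 / 6 * (real (Z \<omega>) * (real (Z \<omega>) - 1) * (real (Z \<omega>) - 2)) \<partial>M)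
     = u * (\<integral>\<omega>. real (Z \<omega>) \<partial>M) - u^2 / 2 * (\<integral>\<omega>. real (Z \<omega>) * (real (Z \<omega>) - 1) \<partial>M)
       + u^3 / 6 * (\<integral>\<omega>. real (Z \<omega>) * (real (Z \<omega>) - 1) * (real (Z \<omega>) - 2) \<partial>M)"
    using i1 i2 i3 by (subst Bochner_Integration.integral_add; (subst Bochner_Integration.integral_diff)?) auto
  ultimately show ?thesis unfolding eq1 by simp
qed

end


theorem theorem5:
  fixes M :: "'a measure"
    and \<xi> :: "nat \<Rightarrow> nat \<Rightarrow> 'a \<Rightarrow> nat"
    and \<epsilon> :: "nat \<Rightarrow> 'a \<Rightarrow> nat"
    and \<nu> lam :: real
  assumes P: "prob_space M"
    and meas_xi: "\<And>n j. n \<ge> 1 \<Longrightarrow> j \<ge> 1 \<Longrightarrow> \<xi> n j \<in> measurable M (count_space UNIV)"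
    and meas_eps: "\<And>n. n \<ge> 1 \<Longrightarrow> \<epsilon> n \<in> measurable M (count_space UNIV)"
    and indep: "prob_space.indep_vars M (\<lambda>_. count_space UNIV)
                  (\<lambda>i. case i of Inl (n, j) \<Rightarrow> \<xi> n j | Inr n \<Rightarrow> \<epsilon> n)
                  ({Inl (n, j) | n j. n \<ge> 1 \<and> j \<ge> 1} \<union> {Inr n | n. n \<ge> 1})"
    and ident: "\<And>n j. n \<ge> 1 \<Longrightarrow> j \<ge> 1 \<Longrightarrow>
                  distr M (count_space UNIV) (\<xi> n j) = distr M (count_space UNIV) (\<xi> n 1)"
    and G_fin: "\<And>n s. n \<ge> 1 \<Longrightarrow> s \<ge> 1 \<Longrightarrow> fact_moment_finite M (\<xi> n 1) s"
    and H_fin: "\<And>n k. n \<ge> 1 \<Longrightarrow> k \<in> {1, 2} \<Longrightarrow> fact_moment_finite M (\<epsilon> n) k"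
    and rho_lt1: "\<And>n. n \<ge> 1 \<Longrightarrow> fact_moment M (\<xi> n 1) 1 < 1"
    and rho_lim: "(\<lambda>n. fact_moment M (\<xi> (Suc n) 1) 1) \<longlonglongrightarrow> 1"
    and rho_div: "\<not> summable (\<lambda>n. 1 - fact_moment M (\<xi> (Suc n) 1) 1)"
    and nu_pos: "0 < \<nu>"
    and G2_lim: "(\<lambda>n. fact_moment M (\<xi> (Suc n) 1) 2 / (1 - fact_moment M (\<xi> (Suc n) 1) 1))
                   \<longlonglongrightarrow> \<nu>"
    and Gs_lim: "\<And>s. s \<ge> 3 \<Longrightarrow>
                   (\<lambda>n. fact_moment M (\<xi> (Suc n) 1) s / (1 - fact_moment M (\<xi> (Suc n) 1) 1))
                   \<longlonglongrightarrow> 0"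
    and m1_lim: "(\<lambda>n. fact_moment M (\<epsilon> (Suc n)) 1 / (1 - fact_moment M (\<xi> (Suc n) 1) 1))
                   \<longlonglongrightarrow> lam"
    and m2_lim: "(\<lambda>n. fact_moment M (\<epsilon> (Suc n)) 2 / (1 - fact_moment M (\<xi> (Suc n) 1) 1))
                   \<longlonglongrightarrow> 0"
  shows "weak_conv_m (\<lambda>n. distr M borel (\<lambda>\<omega>. real (bp_X \<xi> \<epsilon> n \<omega>)))
           (nb_measure (2 * lam / \<nu>) (\<nu> / (2 + \<nu>)))"
proof -
  interpret P: prob_space M by (rule P)
  interpret S: bps M \<xi> \<epsilon> by unfold_locales (fact meas_xi meas_eps indep ident)+
  define \<rho> where "\<rho> k = fact_moment M (\<xi> k 1) 1" for k
  define a where "a k = fact_moment M (\<xi> k 1) 2 / 2" for k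
  define b where "b k = fact_moment M (\<xi> k 1) 3 / 6" for k
  define mm where "mm k = fact_moment M (\<epsilon> k) 1" for k
  define q where "q k = fact_moment M (\<epsilon> k) 2 / 2" for k
  define g where "g k u = 1 - S.GG k (1 - u)" for k u
  define h where "h k v = S.HH k (1 - v)" for k v
  define c where "c = \<nu> / 2"
  have xi_int: "integrable M (\<lambda>\<omega>. real (\<xi> k 1 \<omega>))" "integrable M (\<lambda>\<omega>. real (\<xi> k 1 \<omega>) * (real (\<xi> k 1 \<omega>) - 1))"
    "integrable M (\<lambda>\<omega>. real (\<xi> k 1 \<omega>) * (real (\<xi> k 1 \<omega>) - 1) * (real (\<xi> k 1 \<omega>) - 2))" if "k \<ge> 1" for k
    using G_fin[OF that, of 1] G_fin[OF that, of 2] G_fin[OF that, of 3] by (auto simp: fact_moment_finite_def)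
  have eps_int: "integrable M (\<lambda>\<omega>. real (\<epsilon> k \<omega>))" "integrable M (\<lambda>\<omega>. real (\<epsilon> k \<omega>) * (real (\<epsilon> k \<omega>) - 1))" if "k \<ge> 1" for k
    using H_fin[OF that, of 1] H_fin[OF that, of 2] by (auto simp: fact_moment_finite_def)
  have rho_eq: "\<rho> k = (\<integral>\<omega>. real (\<xi> k 1 \<omega>) \<partial>M)" for k by (simp add: \<rho>_def fact_moment_def)
  have a_eq: "a k = (\<integral>\<omega>. real (\<xi> k 1 \<omega>) * (real (\<xi> k 1 \<omega>) - 1) \<partial>M) / 2" for k by (simp add: a_def fact_moment_def)
  have b_eq: "b k = (\<integral>\<omega>. real (\<xi> k 1 \<omega>) * (real (\<xi> k 1 \<omega>) - 1) * (real (\<xi> k 1 \<omega>) - 2) \<partial>M) / 6" for k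
    by (simp add: b_def fact_moment_def)
  have m_eq: "mm k = (\<integral>\<omega>. real (\<epsilon> k \<omega>) \<partial>M)" for k by (simp add: mm_def fact_moment_def)
  have q_eq: "q k = (\<integral>\<omega>. real (\<epsilon> k \<omega>) * (real (\<epsilon> k \<omega>) - 1) \<partial>M) / 2" for k by (simp add: q_def fact_moment_def)
  have g_eq: "g k u = 1 - (\<integral>\<omega>. (1 - u) ^ \<xi> k 1 \<omega> \<partial>M)" for k u by (simp add: g_def S.GG_def)
  have h_eq: "h k v = (\<integral>\<omega>. (1 - v) ^ \<epsilon> k \<omega> \<partial>M)" for k v by (simp add: h_def S.HH_def)

  have rho_nn: "\<And>k. k \<ge> 1 \<Longrightarrow> 0 \<le> \<rho> k" unfolding rho_eq by (intro integral_nonneg_AE) auto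
  have rho_lt: "\<And>k. k \<ge> 1 \<Longrightarrow> \<rho> k < 1" using rho_lt1 by (simp add: \<rho>_def)
  have b_nn: "\<And>k. k \<ge> 1 \<Longrightarrow> 0 \<le> b k"
  proof -
    fix k :: nat
    have "0 \<le> (\<integral>\<omega>. real (\<xi> k 1 \<omega>) * (real (\<xi> k 1 \<omega>) - 1) * (real (\<xi> k 1 \<omega>) - 2) \<partial>M)"
      by (intro integral_nonneg_AE AE_I2 ff3_nn)
    then show "0 \<le> b k" unfolding b_eq by simp
  qed
  have m_nn: "\<And>k. k \<ge> 1 \<Longrightarrow> 0 \<le> mm k" unfolding m_eq by (intro integral_nonneg_AE) auto
  have g_props: "0 \<le> g k u \<and> g k u \<le> \<rho> k * u \<and> \<rho> k * u - a k * u^2 \<le> g k u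
      \<and> g k u \<le> \<rho> k * u - a k * u^2 + b k * u^3"
    if k: "k \<ge> 1" and u: "0 \<le> u" "u \<le> 1" for k u
  proof -
    have Z: "\<xi> k 1 \<in> measurable M (count_space UNIV)" using meas_xi k by auto
    note T = P.taylor_int[OF Z xi_int(1)[OF k] xi_int(2)[OF k] u]
    note T3 = P.taylor_int3[OF Z xi_int(1)[OF k] xi_int(2)[OF k] xi_int(3)[OF k] u]
    have e1: "\<rho> k * u = u * (\<integral>\<omega>. real (\<xi> k 1 \<omega>) \<partial>M)" by (simp add: rho_eq mult.commute)
    have e2: "a k * u^2 = u^2 / 2 * (\<integral>\<omega>. real (\<xi> k 1 \<omega>) * (real (\<xi> k 1 \<omega>) - 1) \<partial>M)" by (simp add: a_eq)
    have e3: "b k * u^3 = u^3 / 6 * (\<integral>\<omega>. real (\<xi> k 1 \<omega>) * (real (\<xi> k 1 \<omega>) - 1) * (real (\<xi> k 1 \<omega>) - 2) \<partial>M)"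
      by (simp add: b_eq)
    show ?thesis unfolding g_eq e1 e2 e3 using T T3 by linarith
  qed
  have h_props: "0 \<le> h k v \<and> h k v \<le> 1 \<and> 1 - mm k * v \<le> h k v \<and> h k v \<le> 1 - mm k * v + q k * v^2"
    if k: "k \<ge> 1" and v: "0 \<le> v" "v \<le> 1" for k v
  proof -
    have Z: "\<epsilon> k \<in> measurable M (count_space UNIV)" using meas_eps k by auto
    note T = P.taylor_int[OF Z eps_int(1)[OF k] eps_int(2)[OF k] v]
    have R: "0 \<le> h k v" "h k v \<le> 1" using P.gf_range(2,3)[OF Z, of "1 - v"] v by (auto simp: h_eq)
    have e1: "mm k * v = v * (\<integral>\<omega>. real (\<epsilon> k \<omega>) \<partial>M)" by (simp add: m_eq mult.commute)
    have e2: "q k * v^2 = v^2 / 2 * (\<integral>\<omega>. real (\<epsilon> k \<omega>) * (real (\<epsilon> k \<omega>) - 1) \<partial>M)" by (simp add: q_eq)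
    show ?thesis using R unfolding h_eq e1 e2 using T by linarith
  qed
  have lim_rho': "\<rho> \<longlonglongrightarrow> 1"
  proof -
    have "(\<lambda>n. \<rho> (Suc n)) \<longlonglongrightarrow> 1" using rho_lim by (simp add: \<rho>_def)
    then show ?thesis using filterlim_sequentially_Suc[of \<rho> "nhds 1"] by simp
  qed
  have "(\<lambda>n. a (Suc n) / (1 - \<rho> (Suc n))) \<longlonglongrightarrow> \<nu> / 2"
  proof -
    have l: "(\<lambda>n. fact_moment M (\<xi> (Suc n) 1) 2 / (1 - fact_moment M (\<xi> (Suc n) 1) 1) / 2) \<longlonglongrightarrow> \<nu> / 2"
      by (intro tendsto_divide G2_lim tendsto_const) simp
    moreover have "\<And>n. a (Suc n) / (1 - \<rho> (Suc n)) = (\<lambda>n. fact_moment M (\<xi> (Suc n) 1) 2 / (1 - fact_moment M (\<xi> (Suc n) 1) 1) / 2) n"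
      by (simp add: a_def \<rho>_def)
    ultimately show ?thesis by (simp only:)
  qed
  then have lim_a: "(\<lambda>k. a k / (1 - \<rho> k)) \<longlonglongrightarrow> c"
    using filterlim_sequentially_Suc[of "\<lambda>k. a k / (1 - \<rho> k)" "nhds c"] by (simp add: c_def)
  have "(\<lambda>n. b (Suc n) / (1 - \<rho> (Suc n))) \<longlonglongrightarrow> 0 / 6"
  proof -
    have "(\<lambda>n. fact_moment M (\<xi> (Suc n) 1) 3 / (1 - fact_moment M (\<xi> (Suc n) 1) 1) / 6) \<longlonglongrightarrow> 0 / 6"
      by (intro tendsto_divide Gs_lim tendsto_const) simp_all
    moreover have "\<And>n. b (Suc n) / (1 - \<rho> (Suc n)) = (\<lambda>n. fact_moment M (\<xi> (Suc n) 1) 3 / (1 - fact_moment M (\<xi> (Suc n) 1) 1) / 6) n"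
      by (simp add: b_def \<rho>_def)
    ultimately show ?thesis by (simp only:)
  qed
  then have lim_b: "(\<lambda>k. b k / (1 - \<rho> k)) \<longlonglongrightarrow> 0"
    using filterlim_sequentially_Suc[of "\<lambda>k. b k / (1 - \<rho> k)" "nhds 0"] by simp
  have lim_m: "(\<lambda>k. mm k / (1 - \<rho> k)) \<longlonglongrightarrow> lam"
    using m1_lim filterlim_sequentially_Suc[of "\<lambda>k. mm k / (1 - \<rho> k)" "nhds lam"] by (simp add: mm_def \<rho>_def)
  have "(\<lambda>n. q (Suc n) / (1 - \<rho> (Suc n))) \<longlonglongrightarrow> 0 / 2"
  proof -
    have "(\<lambda>n. fact_moment M (\<epsilon> (Suc n)) 2 / (1 - fact_moment M (\<xi> (Suc n) 1) 1) / 2) \<longlonglongrightarrow> 0 / 2"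
      by (intro tendsto_divide m2_lim tendsto_const) simp
    moreover have "\<And>n. q (Suc n) / (1 - \<rho> (Suc n)) = (\<lambda>n. fact_moment M (\<epsilon> (Suc n)) 2 / (1 - fact_moment M (\<xi> (Suc n) 1) 1) / 2) n"
      by (simp add: q_def \<rho>_def)
    ultimately show ?thesis by (simp only:)
  qed
  then have lim_q: "(\<lambda>k. q k / (1 - \<rho> k)) \<longlonglongrightarrow> 0"
    using filterlim_sequentially_Suc[of "\<lambda>k. q k / (1 - \<rho> k)" "nhds 0"] by simp
  have rho_div': "\<not> summable (\<lambda>k. 1 - \<rho> k)"
    using rho_div summable_Suc_iff[of "\<lambda>k. 1 - \<rho> k"] by (simp add: \<rho>_def)
  have c_pos: "0 < c" using nu_pos by (simp add: c_def)
  have lam_nn: "0 \<le> lam"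
  proof (rule tendsto_lowerbound[OF m1_lim])
    show "\<forall>\<^sub>F n in sequentially. 0 \<le> fact_moment M (\<epsilon> (Suc n)) 1 / (1 - fact_moment M (\<xi> (Suc n) 1) 1)"
    proof (intro always_eventually allI)
      fix n
      have "0 \<le> mm (Suc n)" "0 < 1 - \<rho> (Suc n)" using m_nn[of "Suc n"] rho_lt[of "Suc n"] by auto
      then show "0 \<le> fact_moment M (\<epsilon> (Suc n)) 1 / (1 - fact_moment M (\<xi> (Suc n) 1) 1)"
        by (simp add: mm_def \<rho>_def)
    qed
  qed simp
  have g_nn: "\<And>k u. k \<ge> 1 \<Longrightarrow> 0 \<le> u \<Longrightarrow> u \<le> 1 \<Longrightarrow> 0 \<le> g k u" using g_props by blast
  have g_le: "\<And>k u. k \<ge> 1 \<Longrightarrow> 0 \<le> u \<Longrightarrow> u \<le> 1 \<Longrightarrow> g k u \<le> \<rho> k * u" using g_props by blast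
  have g_lo: "\<And>k u. k \<ge> 1 \<Longrightarrow> 0 \<le> u \<Longrightarrow> u \<le> 1 \<Longrightarrow> \<rho> k * u - a k * u^2 \<le> g k u" using g_props by blast
  have g_up: "\<And>k u. k \<ge> 1 \<Longrightarrow> 0 \<le> u \<Longrightarrow> u \<le> 1 \<Longrightarrow> g k u \<le> \<rho> k * u - a k * u^2 + b k * u^3" using g_props by blast
  have h_nn: "\<And>k v. k \<ge> 1 \<Longrightarrow> 0 \<le> v \<Longrightarrow> v \<le> 1 \<Longrightarrow> 0 \<le> h k v" using h_props by blast
  have h_le1: "\<And>k v. k \<ge> 1 \<Longrightarrow> 0 \<le> v \<Longrightarrow> v \<le> 1 \<Longrightarrow> h k v \<le> 1" using h_props by blast
  have h_lo: "\<And>k v. k \<ge> 1 \<Longrightarrow> 0 \<le> v \<Longrightarrow> v \<le> 1 \<Longrightarrow> 1 - mm k * v \<le> h k v" using h_props by blast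
  have h_up: "\<And>k v. k \<ge> 1 \<Longrightarrow> 0 \<le> v \<Longrightarrow> v \<le> 1 \<Longrightarrow> h k v \<le> 1 - mm k * v + q k * v^2" using h_props by blast
  interpret A: bpa \<rho> a b mm q g h c lam
    by unfold_locales (fact rho_nn rho_lt b_nn m_nn g_nn g_le g_lo g_up h_nn h_le1 h_lo h_up
        lim_a lim_b lim_m lim_q lim_rho' rho_div' c_pos lam_nn)+

  have FP: "S.FF n (1 - u) = A.PP u n" if "0 \<le> u" "u \<le> 1" for n u
    using that
  proof (induction n arbitrary: u)
    case 0 then show ?case by (simp add: S.FF_def A.PP_def P.prob_space)
  next
    case (Suc n)
    have gu: "0 \<le> g (Suc n) u" "g (Suc n) u \<le> 1"
    proof -
      show "0 \<le> g (Suc n) u" using g_nn[of "Suc n" u] Suc.prems by auto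
      have "g (Suc n) u \<le> \<rho> (Suc n) * u" using g_le[of "Suc n" u] Suc.prems by auto
      also have "\<dots> \<le> 1" using rho_nn[of "Suc n"] rho_lt[of "Suc n"] Suc.prems
        by (simp add: mult_le_one)
      finally show "g (Suc n) u \<le> 1" .
    qed
    have "S.FF (Suc n) (1 - u) = S.FF n (S.GG (Suc n) (1 - u)) * S.HH (Suc n) (1 - u)"
      by (rule S.FF_rec) (use Suc.prems in auto)
    also have "S.GG (Suc n) (1 - u) = 1 - g (Suc n) u" by (simp add: g_def)
    also have "S.FF n (1 - g (Suc n) u) = A.PP (g (Suc n) u) n" by (rule Suc.IH) (use gu in auto)
    also have "S.HH (Suc n) (1 - u) = h (Suc n) u" by (simp add: h_def)
    also have "A.PP (g (Suc n) u) n * h (Suc n) u = A.PP u (Suc n)"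
    proof -
      have "{1..Suc n} = insert (Suc n) {1..n}" by auto
      then have "A.PP u (Suc n) = h (Suc n) (uc g (Suc n) (Suc n) u) * (\<Prod>k\<in>{1..n}. h k (uc g k (Suc n) u))"
        unfolding A.PP_def by simp
      also have "\<dots> = h (Suc n) u * (\<Prod>k\<in>{1..n}. h k (uc g k n (g (Suc n) u)))"
        by (intro arg_cong2[where f="(*)"] prod.cong refl) (auto simp: uc_self)
      finally show ?thesis by (simp add: A.PP_def mult.commute)
    qed
    finally show ?case .
  qed
  define r where "r = 2 * lam / \<nu>"
  define p where "p = \<nu> / (2 + \<nu>)"
  have r0: "0 \<le> r" using lam_nn nu_pos by (simp add: r_def)
  have p0: "0 \<le> p" "p < 1" using nu_pos by (auto simp: p_def)
  define pn where "pn n k = P.prob {\<omega> \<in> space M. bp_X \<xi> \<epsilon> n \<omega> = k}" for n k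
  have pn_sums: "(\<lambda>k. pn n k * x^k) sums S.FF n x" if "0 \<le> x" "x \<le> 1" for n x
    using P.gf_sums[OF S.X_meas that] unfolding S.FF_def pn_def .
  have pn_sum1: "(\<lambda>k. pn n k) sums 1" for n
    using pn_sums[of 1 n] by (simp add: S.FF_def P.prob_space)
  have nb_sum1: "(\<lambda>k. nb_prob r p k) sums 1"
  proof -
    have "(\<lambda>k. nb_prob r p k * 1^k) sums ((1 - p) powr r * (1 - p * 1) powr (- r))"
      by (rule nb_sums[OF r0 p0]) auto
    moreover have "(1 - p) powr r * (1 - p * 1) powr (- r) = 1" using p0 by (simp add: powr_minus)
    ultimately show ?thesis by simp
  qed
  have ident_lim: "exp (- (lam / c) * ln (1 + c * (1 - x))) = (1 - p) powr r * (1 - p * x) powr (- r)"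
    if x: "0 \<le> x" "x < 1" for x
  proof -
    have pos: "0 < 2 + \<nu> * (1 - x)" using nu_pos x by (simp add: add_pos_nonneg)
    have "1 + c * (1 - x) = (2 + \<nu> * (1 - x)) / 2" by (simp add: c_def field_simps)
    then have "exp (- (lam / c) * ln (1 + c * (1 - x))) = exp (r * (ln 2 - ln (2 + \<nu> * (1 - x))))"
      using pos nu_pos by (simp add: ln_div c_def r_def field_simps)
    moreover have "1 - p = 2 / (2 + \<nu>)" using nu_pos by (simp add: p_def field_simps)
    moreover have "1 - p * x = (2 + \<nu> * (1 - x)) / (2 + \<nu>)" using nu_pos by (simp add: p_def field_simps)
    moreover have "(2 / (2 + \<nu>)) powr r * ((2 + \<nu> * (1 - x)) / (2 + \<nu>)) powr (- r)
        = exp (r * (ln 2 - ln (2 + \<nu> * (1 - x))))"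
      using pos nu_pos by (simp add: powr_def ln_div exp_add[symmetric] algebra_simps)
    ultimately show ?thesis by simp
  qed
  have conv: "(\<lambda>n. \<Sum>i. pn n i * x^i) \<longlonglongrightarrow> (\<Sum>i. nb_prob r p i * x^i)" if x: "0 \<le> x" "x < 1" for x
  proof -
    have "(\<Sum>i. pn n i * x^i) = A.PP (1 - x) n" for n
      using sums_unique[OF pn_sums[of x n]] FP[of "1 - x" n] x by simp
    moreover have "(\<Sum>i. nb_prob r p i * x^i) = exp (- (lam / c) * ln (1 + c * (1 - x)))"
      using sums_unique[OF nb_sums[OF r0 p0, of x]] ident_lim[OF x] x by simp
    moreover have "(\<lambda>n. A.PP (1 - x) n) \<longlonglongrightarrow> exp (- (lam / c) * ln (1 + c * (1 - x)))"
      by (rule A.PP_lim) (use x in auto)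
    ultimately show ?thesis by simp
  qed
  have pmf_lim: "(\<lambda>n. pn n k) \<longlonglongrightarrow> nb_prob r p k" for k
  proof (rule pgf_conv)
    show "0 \<le> pn n i" for n i by (simp add: pn_def)
    show "summable (pn n)" for n using pn_sum1[of n] by (simp add: sums_iff)
    show "suminf (pn n) \<le> 1" for n using pn_sum1[of n] by (simp add: sums_iff)
    show "0 \<le> nb_prob r p i" for i using r0 p0 by (simp add: nb_prob_nonneg)
    show "summable (nb_prob r p)" using nb_sum1 by (simp add: sums_iff)
    show "suminf (nb_prob r p) \<le> 1" using nb_sum1 by (simp add: sums_iff)
  qed (rule conv)

  have fin: "finite {k::nat. real k \<le> t}" for t
  proof -
    have "{k::nat. real k \<le> t} \<subseteq> {..nat \<lceil>t\<rceil>}"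
    proof
      fix k assume "k \<in> {k::nat. real k \<le> t}"
      then have "real k \<le> t" by simp
      then have "real k \<le> real (nat \<lceil>t\<rceil>)" using real_nat_ceiling_ge[of t] by linarith
      then show "k \<in> {..nat \<lceil>t\<rceil>}" by simp
    qed
    then show ?thesis by (rule finite_subset) simp
  qed
  have cdf_n: "cdf (distr M borel (\<lambda>\<omega>. real (bp_X \<xi> \<epsilon> n \<omega>))) t = (\<Sum>k\<in>{k. real k \<le> t}. pn n k)" for n t
  proof -
    have mX: "bp_X \<xi> \<epsilon> n \<in> measurable M (count_space UNIV)" by (rule S.X_meas)
    have mR: "(\<lambda>\<omega>. real (bp_X \<xi> \<epsilon> n \<omega>)) \<in> borel_measurable M" using mX by measurable
    have "cdf (distr M borel (\<lambda>\<omega>. real (bp_X \<xi> \<epsilon> n \<omega>))) t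
        = measure M ((\<lambda>\<omega>. real (bp_X \<xi> \<epsilon> n \<omega>)) -` {..t} \<inter> space M)"
      unfolding cdf_def2 by (rule measure_distr[OF mR]) simp
    also have "(\<lambda>\<omega>. real (bp_X \<xi> \<epsilon> n \<omega>)) -` {..t} \<inter> space M
        = (\<Union>k\<in>{k. real k \<le> t}. {\<omega> \<in> space M. bp_X \<xi> \<epsilon> n \<omega> = k})" by auto
    also have "measure M \<dots> = (\<Sum>k\<in>{k. real k \<le> t}. measure M {\<omega> \<in> space M. bp_X \<xi> \<epsilon> n \<omega> = k})"
    proof (rule measure_finite_Union[OF fin])
      show "(\<lambda>k. {\<omega> \<in> space M. bp_X \<xi> \<epsilon> n \<omega> = k}) ` {k. real k \<le> t} \<subseteq> sets M"
        using mX by auto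
      show "disjoint_family_on (\<lambda>k. {\<omega> \<in> space M. bp_X \<xi> \<epsilon> n \<omega> = k}) {k. real k \<le> t}"
        by (auto simp: disjoint_family_on_def)
    qed (simp add: P.emeasure_eq_measure)
    finally show ?thesis by (simp add: pn_def)
  qed
  have cdf_nb: "cdf (nb_measure r p) t = (\<Sum>k\<in>{k. real k \<le> t}. nb_prob r p k)" for t
  proof -
    define D where "D = density (count_space UNIV) (\<lambda>k::nat. ennreal (nb_prob r p k))"
    have mreal: "real \<in> measurable D borel" unfolding D_def by simp
    have "cdf (nb_measure r p) t = measure D (real -` {..t} \<inter> space D)"
      unfolding cdf_def2 nb_measure_def D_def[symmetric] by (rule measure_distr[OF mreal]) simp
    also have "real -` {..t} \<inter> space D = {k. real k \<le> t}" by (auto simp: D_def)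
    also have "measure D {k. real k \<le> t} = enn2real (\<Sum>k\<in>{k. real k \<le> t}. ennreal (nb_prob r p k))"
      unfolding measure_def D_def
      by (subst emeasure_density) (auto simp: nn_integral_indicator_finite[OF fin])
    also have "\<dots> = (\<Sum>k\<in>{k. real k \<le> t}. nb_prob r p k)"
      using r0 p0 by (simp add: nb_prob_nonneg sum_nonneg)
    finally show ?thesis .
  qed
  show ?thesis
    unfolding weak_conv_m_def weak_conv_def
  proof (intro allI impI)
    fix t :: real
    show "(\<lambda>n. cdf (distr M borel (\<lambda>\<omega>. real (bp_X \<xi> \<epsilon> n \<omega>))) t) \<longlonglongrightarrow> cdf (nb_measure (2 * lam / \<nu>) (\<nu> / (2 + \<nu>))) t"
      unfolding cdf_n r_def[symmetric] p_def[symmetric] cdf_nb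
      by (intro tendsto_sum pmf_lim)
  qed
qed


end
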